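(* Let $U$ be a random utility function, fix $x\ge0$, and assume that $\mathcal A(U,G,x)=\mathcal A(G,x)$ for all $G\in\mathcal W^0_T$. Define $\rho_x(G):=p(-G,x)$. 1. $\rho_x$ is a monetary measure of risk on $\mathcal W^0_T$. 2. If each $S_t$ is Borel measurable on $\Omega^t$, $NA(\mathcal Q^T)$ holds and $u(0,x)>-\infty$, then $\rho_x$ is a convex monetary measure of risk on $\{G\in\mathcal W^0_T: u(-G,z)<\infty\ \text{for all } z\in\mathbb R\}$. 3. If furthermore $u(0,x-\delta)<u(0,x)$ for all $\delta>0$, then $\rho_x$ is normalized.
   Context: Framework: $T\ge1$; Polish spaces $\Omega_1,\dots,\Omega_T$; $\Omega^t:=\Omega_1\times\cdots\times\Omega_t$. $\mathfrak P(X)$: Borel probability measures on Polish $X$; $\mathcal B_c(X)$: universal $\sigma$-algebra, each $P$ extended to it. $\mathcal SK_t$: universally measurable stochastic kernels on $\Omega_t$ given $\Omega^{t-1}$; $P\otimes p(A):=\int\int1_A(\omega^{t-1},\omega_t)p(d\omega_t,\omega^{t-1})P(d\omega^{t-1})$. Given random sets $\mathcal Q_{t+1}:\Omega^t\twoheadrightarrow\mathfrak P(\Omega_{t+1})$, $\mathcal Q^T:=\{Q_1\otimes q_2\otimes\cdots\otimes q_T:Q_1\in\mathcal Q_1,\ q_{s+1}\in\mathcal SK_{s+1},\ q_{s+1}(\cdot,\omega^s)\in\mathcal Q_{s+1}(\omega^s)\ Q_s\text{-a.s.}\}$. "$\mathcal Q^T$-q.s." means outside a set contained, for every $P\in\mathcal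 Q^T$, in a $P$-null universally measurable set. $\mathcal W^0_T$: universally measurable $X:\Omega^T\to\mathbb R\cup\{\pm\infty\}$. $S=(S_t)_{0\le t\le T}$ $\mathbb R^d$-valued with $S_t$ universally measurable on $\Omega^t$; $\Phi$: strategies $\phi=(\phi_t)$, $\phi_t:\Omega^{t-1}\to\mathbb R^d$ universally measurable; $V_T^{x,\phi}:=x+\sum_{s=1}^T\phi_s\cdot(S_s-S_{s-1})$. $NA(\mathcal Q^T)$: for all $\phi$, $V_T^{0,\phi}\ge0$ q.s. implies $V_T^{0,\phi}=0$ q.s. $\mathcal A(G,x):=\{\phi\in\Phi:V_T^{x,\phi}\ge G\ \mathcal Q^T\text{-q.s.}\}$. A random utility function is $U:\Omega^T\times(0,\infty)\to\mathbb R$ with $U(\cdot,x)$ universally measurable and $U(\omega^T,\cdot)$ concave, strictly increasing, $C^2$ on $(0,\infty)$, extended by right-continuity at $0$ and by $-\infty$ on $(-\infty,0)$. $\Phi(U,G,x):=\{\phi\in\Phi:E_PU^+(\cdot,V_T^{x,\phi}-G)<\infty\ \forall P\in\mathcal Q^T\}$, $\mathcal A(U,G,x):=\Phi(U,G,x)\cap\mathcal A(G,x)$, $u(G,x):=\sup_{\phi\in\mathcal A(U,G,x)}\inf_{P\in\mathcal Q^T}E_PU(\cdot,V_T^{x,\phi}-G)$ ($-\infty$ if $\mathcal A(U,G,x)=\emptyset$), $p(G,x):=\inf\{z\in\mathbb R:u(G,x+z)\ge u(0,x)\}$ ($+\infty$ if empty). A monetary measure of risk on a set $\mathcal X\subset\mathcal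 W^0_T$ is a map $\rho:\mathcal X\to\mathbb R\cup\{\pm\infty\}$ with $\rho(G)\le\rho(H)$ whenever $G\ge H$ $\mathcal Q^T$-q.s., and $\rho(G+m)=\rho(G)-m$ for $m\in\mathbb R$; it is normalized if $\rho(0)=0$, convex if $\rho(\lambda G+(1-\lambda)H)\le\lambda\rho(G)+(1-\lambda)\rho(H)$ for $\lambda\in[0,1]$. *)

theory Defs
  imports "HOL-Analysis.Analysis" "HOL-Probability.Probability"
begin

text \<open>Time runs over 1..T. Each Polish space Omega_t is represented as a
  closed subset Om t of a fixed Polish type 'a (every Polish space is homeomorphic to a
  closed subset of nat => real, which is of class polish_space). A point of Omega^t is an
  extensional function on {1..t} (the space of PiM {1..t}); Omega^0 is a singleton.\<close>

definition OmS :: "(nat \<Rightarrow> 'a::polish_space set) \<Rightarrow> nat \<Rightarrow> 'a measure" where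
  "OmS Om s = restrict_space borel (Om s)"

text \<open>Borel sigma-algebra on Omega^t (product sigma-algebra = Borel of product, separable case).\<close>
definition OmP :: "(nat \<Rightarrow> 'a::polish_space set) \<Rightarrow> nat \<Rightarrow> (nat \<Rightarrow> 'a) measure" where
  "OmP Om t = PiM {1..t} (OmS Om)"

definition probs :: "'b measure \<Rightarrow> 'b measure set" where
  "probs M = {P. prob_space P \<and> sets P = sets M}"

definition univ_sets :: "'b measure \<Rightarrow> 'b set set" where
  "univ_sets M = {A. A \<subseteq> space M \<and> (\<forall>P\<in>probs M. A \<in> sets (completion P))}"

definition univ :: "'b measure \<Rightarrow> 'b measure" where
  "univ M = sigma (space M) (univ_sets M)"

definition SK :: "(nat \<Rightarrow> 'a::polish_space set) \<Rightarrow> nat \<Rightarrow> ((nat \<Rightarrow> 'a) \<Rightarrow> 'a measure) \<Rightarrow> bool" where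
  "SK Om t k \<longleftrightarrow> (\<forall>w\<in>space (OmP Om (t - 1)). k w \<in> probs (OmS Om t)) \<and>
     (\<forall>A\<in>sets (OmS Om t). (\<lambda>w. emeasure (k w) A) \<in> borel_measurable (univ (OmP Om (t - 1))))"

definition kcomp :: "(nat \<Rightarrow> 'a::polish_space set) \<Rightarrow> nat \<Rightarrow> (nat \<Rightarrow> 'a) measure
    \<Rightarrow> ((nat \<Rightarrow> 'a) \<Rightarrow> 'a measure) \<Rightarrow> (nat \<Rightarrow> 'a) measure" where
  "kcomp Om t P p = measure_of (space (OmP Om t)) (sets (OmP Om t))
     (\<lambda>A. \<integral>\<^sup>+ w. (\<integral>\<^sup>+ y. indicator A (w(t := y)) \<partial>(p w)) \<partial>(completion P))"

text \<open>Q_1 (x) q_2 (x) ... (x) q_t, starting from the point mass on Omega^0 (Q_1 = q_1 at that point).\<close>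
fun kprod :: "(nat \<Rightarrow> 'a::polish_space set) \<Rightarrow> (nat \<Rightarrow> (nat \<Rightarrow> 'a) \<Rightarrow> 'a measure) \<Rightarrow> nat
    \<Rightarrow> (nat \<Rightarrow> 'a) measure" where
  "kprod Om q 0 = return (OmP Om 0) (\<lambda>_. undefined)"
| "kprod Om q (Suc t) = kcomp Om (Suc t) (kprod Om q t) (q (Suc t))"

text \<open>The set Q^T; Qs t w is the random set Q_t(w) for w in Omega^(t-1).\<close>
definition QT :: "(nat \<Rightarrow> 'a::polish_space set) \<Rightarrow> nat \<Rightarrow> (nat \<Rightarrow> (nat \<Rightarrow> 'a) \<Rightarrow> 'a measure set)
    \<Rightarrow> (nat \<Rightarrow> 'a) measure set" where
  "QT Om T Qs = {kprod Om q T | q. \<forall>t\<in>{1..T}. SK Om t (q t) \<and>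
       (AE w in completion (kprod Om q (t - 1)). q t w \<in> Qs t w)}"

definition qs :: "'b measure set \<Rightarrow> ('b \<Rightarrow> bool) \<Rightarrow> bool" where
  "qs Ps \<phi> \<longleftrightarrow> (\<forall>P\<in>Ps. AE w in completion P. \<phi> w)"

definition W0 :: "(nat \<Rightarrow> 'a::polish_space set) \<Rightarrow> nat \<Rightarrow> ((nat \<Rightarrow> 'a) \<Rightarrow> ereal) set" where
  "W0 Om T = {G. G \<in> borel_measurable (univ (OmP Om T))}"

definition Strat :: "(nat \<Rightarrow> 'a::polish_space set) \<Rightarrow> nat \<Rightarrow> (nat \<Rightarrow> (nat \<Rightarrow> 'a) \<Rightarrow> 'd::euclidean_space) set" where
  "Strat Om T = {\<phi>. \<forall>t\<in>{1..T}. \<phi> t \<in> borel_measurable (univ (OmP Om (t - 1)))}"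

text \<open>Terminal wealth V_T^{x,phi}, evaluated on omega^T; omega^t is the restriction to {1..t}.\<close>
definition VT :: "nat \<Rightarrow> (nat \<Rightarrow> (nat \<Rightarrow> 'a) \<Rightarrow> 'd::euclidean_space) \<Rightarrow> real
    \<Rightarrow> (nat \<Rightarrow> (nat \<Rightarrow> 'a) \<Rightarrow> 'd) \<Rightarrow> (nat \<Rightarrow> 'a) \<Rightarrow> real" where
  "VT T S x \<phi> w = x + (\<Sum>s=1..T. inner (\<phi> s (restrict w {1..s - 1}))
       (S s (restrict w {1..s}) - S (s - 1) (restrict w {1..s - 1})))"

definition NA :: "(nat \<Rightarrow> 'a::polish_space set) \<Rightarrow> nat \<Rightarrow> (nat \<Rightarrow> (nat \<Rightarrow> 'a) \<Rightarrow> 'a measure set)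
    \<Rightarrow> (nat \<Rightarrow> (nat \<Rightarrow> 'a) \<Rightarrow> 'd::euclidean_space) \<Rightarrow> bool" where
  "NA Om T Qs S \<longleftrightarrow> (\<forall>\<phi>\<in>Strat Om T.
      qs (QT Om T Qs) (\<lambda>w. VT T S 0 \<phi> w \<ge> 0) \<longrightarrow> qs (QT Om T Qs) (\<lambda>w. VT T S 0 \<phi> w = 0))"

definition AG :: "(nat \<Rightarrow> 'a::polish_space set) \<Rightarrow> nat \<Rightarrow> (nat \<Rightarrow> (nat \<Rightarrow> 'a) \<Rightarrow> 'a measure set)
    \<Rightarrow> (nat \<Rightarrow> (nat \<Rightarrow> 'a) \<Rightarrow> 'd::euclidean_space) \<Rightarrow> ((nat \<Rightarrow> 'a) \<Rightarrow> ereal) \<Rightarrow> real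
    \<Rightarrow> (nat \<Rightarrow> (nat \<Rightarrow> 'a) \<Rightarrow> 'd) set" where
  "AG Om T Qs S G x = {\<phi>\<in>Strat Om T. qs (QT Om T Qs) (\<lambda>w. ereal (VT T S x \<phi> w) \<ge> G w)}"

text \<open>Random utility functions: U w is concave, strictly increasing and C^2 on (0,oo);
  values of U w on (-oo,0] are irrelevant, see Uext.\<close>
definition random_utility :: "(nat \<Rightarrow> 'a::polish_space set) \<Rightarrow> nat \<Rightarrow> ((nat \<Rightarrow> 'a) \<Rightarrow> real \<Rightarrow> real) \<Rightarrow> bool" where
  "random_utility Om T U \<longleftrightarrow>
     (\<forall>y>0. (\<lambda>w. U w y) \<in> borel_measurable (univ (OmP Om T))) \<and>
     (\<forall>w\<in>space (OmP Om T). concave_on {0<..} (U w) \<and> strict_mono_on {0<..} (U w) \<and>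
        (\<exists>U1 U2. (\<forall>y>0. (U w has_real_derivative U1 y) (at y) \<and> (U1 has_real_derivative U2 y) (at y))
                 \<and> continuous_on {0<..} U2))"

definition Uext :: "((nat \<Rightarrow> 'a) \<Rightarrow> real \<Rightarrow> real) \<Rightarrow> (nat \<Rightarrow> 'a) \<Rightarrow> ereal \<Rightarrow> ereal" where
  "Uext U w y = (if y < 0 then -\<infinity>
      else if y = 0 then Lim (at_right (0::real)) (\<lambda>z. ereal (U w z))
      else if y = \<infinity> then Lim at_top (\<lambda>z. ereal (U w z))
      else ereal (U w (real_of_ereal y)))"

definition Epos :: "'b measure \<Rightarrow> ('b \<Rightarrow> ereal) \<Rightarrow> ennreal" where
  "Epos P f = (\<integral>\<^sup>+ w. e2ennreal (f w) \<partial>(completion P))"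

definition Eneg :: "'b measure \<Rightarrow> ('b \<Rightarrow> ereal) \<Rightarrow> ennreal" where
  "Eneg P f = (\<integral>\<^sup>+ w. e2ennreal (- f w) \<partial>(completion P))"

definition Ex :: "'b measure \<Rightarrow> ('b \<Rightarrow> ereal) \<Rightarrow> ereal" where
  "Ex P f = (if Epos P f = \<infinity> \<and> Eneg P f = \<infinity> then -\<infinity>
             else enn2ereal (Epos P f) - enn2ereal (Eneg P f))"

definition AUG :: "(nat \<Rightarrow> 'a::polish_space set) \<Rightarrow> nat \<Rightarrow> (nat \<Rightarrow> (nat \<Rightarrow> 'a) \<Rightarrow> 'a measure set)
    \<Rightarrow> (nat \<Rightarrow> (nat \<Rightarrow> 'a) \<Rightarrow> 'd::euclidean_space) \<Rightarrow> ((nat \<Rightarrow> 'a) \<Rightarrow> real \<Rightarrow> real)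
    \<Rightarrow> ((nat \<Rightarrow> 'a) \<Rightarrow> ereal) \<Rightarrow> real \<Rightarrow> (nat \<Rightarrow> (nat \<Rightarrow> 'a) \<Rightarrow> 'd) set" where
  "AUG Om T Qs S U G x = {\<phi>\<in>AG Om T Qs S G x. \<forall>P\<in>QT Om T Qs.
      Epos P (\<lambda>w. Uext U w (ereal (VT T S x \<phi> w) - G w)) < \<infinity>}"

text \<open>Value function u(G,x); SUP over the empty set is -oo.\<close>
definition uval :: "(nat \<Rightarrow> 'a::polish_space set) \<Rightarrow> nat \<Rightarrow> (nat \<Rightarrow> (nat \<Rightarrow> 'a) \<Rightarrow> 'a measure set)
    \<Rightarrow> (nat \<Rightarrow> (nat \<Rightarrow> 'a) \<Rightarrow> 'd::euclidean_space) \<Rightarrow> ((nat \<Rightarrow> 'a) \<Rightarrow> real \<Rightarrow> real)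
    \<Rightarrow> ((nat \<Rightarrow> 'a) \<Rightarrow> ereal) \<Rightarrow> real \<Rightarrow> ereal" where
  "uval Om T Qs S U G x = (SUP \<phi>\<in>AUG Om T Qs S U G x. INF P\<in>QT Om T Qs.
      Ex P (\<lambda>w. Uext U w (ereal (VT T S x \<phi> w) - G w)))"

text \<open>Indifference price p(G,x); Inf of the empty set is +oo.\<close>
definition pval :: "(nat \<Rightarrow> 'a::polish_space set) \<Rightarrow> nat \<Rightarrow> (nat \<Rightarrow> (nat \<Rightarrow> 'a) \<Rightarrow> 'a measure set)
    \<Rightarrow> (nat \<Rightarrow> (nat \<Rightarrow> 'a) \<Rightarrow> 'd::euclidean_space) \<Rightarrow> ((nat \<Rightarrow> 'a) \<Rightarrow> real \<Rightarrow> real)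
    \<Rightarrow> ((nat \<Rightarrow> 'a) \<Rightarrow> ereal) \<Rightarrow> real \<Rightarrow> ereal" where
  "pval Om T Qs S U G x = Inf (ereal ` {z. uval Om T Qs S U G (x + z) \<ge> uval Om T Qs S U (\<lambda>_. 0) x})"

definition monetary_risk :: "'b measure set \<Rightarrow> ('b \<Rightarrow> ereal) set \<Rightarrow> (('b \<Rightarrow> ereal) \<Rightarrow> ereal) \<Rightarrow> bool" where
  "monetary_risk Ps X \<rho> \<longleftrightarrow>
     (\<forall>G\<in>X. \<forall>H\<in>X. qs Ps (\<lambda>w. G w \<ge> H w) \<longrightarrow> \<rho> G \<le> \<rho> H) \<and>
     (\<forall>G\<in>X. \<forall>m::real. (\<lambda>w. G w + ereal m) \<in> X \<longrightarrow> \<rho> (\<lambda>w. G w + ereal m) = \<rho> G - ereal m)"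

definition convex_risk :: "'b measure set \<Rightarrow> ('b \<Rightarrow> ereal) set \<Rightarrow> (('b \<Rightarrow> ereal) \<Rightarrow> ereal) \<Rightarrow> bool" where
  "convex_risk Ps X \<rho> \<longleftrightarrow> monetary_risk Ps X \<rho> \<and>
     (\<forall>G\<in>X. \<forall>H\<in>X. \<forall>l\<in>{0..1::real}.
        (\<lambda>w. ereal l * G w + ereal (1 - l) * H w) \<in> X \<longrightarrow>
        \<rho> (\<lambda>w. ereal l * G w + ereal (1 - l) * H w) \<le> ereal l * \<rho> G + ereal (1 - l) * \<rho> H)"

end

theory Submission
  imports Defs
begin

lemma kprod_props:
  assumes SKq: "\<forall>s\<in>{1..T}. SK Om s (q s)"
  shows "t \<le> T \<Longrightarrow> sets (kprod Om q t) = sets (OmP Om t) \<and> emeasure (kprod Om q t) (space (kprod Om q t)) \<le> 1"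
proof (induction t)
  case 0
  have sp: "space (OmP Om 0) = {\<lambda>_. undefined}"
    by (simp add: OmP_def space_PiM)
  have "emeasure (return (OmP Om 0) (\<lambda>_. undefined)) X \<le> 1" for X
    by (cases "X \<in> sets (OmP Om 0)") (auto simp: emeasure_notin_sets indicator_def)
  then show ?case by (simp add: indicator_def)
next
  case (Suc t)
  let ?P = "kprod Om q t"
  let ?p = "q (Suc t)"
  let ?mu = "(\<lambda>A. \<integral>\<^sup>+ w. (\<integral>\<^sup>+ y. indicator A (w(Suc t := y)) \<partial>(?p w)) \<partial>(completion ?P))"
  have IH: "sets ?P = sets (OmP Om t)" "emeasure ?P (space ?P) \<le> 1" using Suc by auto
  have spP: "space ?P = space (OmP Om t)" using IH(1) by (rule sets_eq_imp_space_eq)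
  have sa: "sigma_algebra (space (OmP Om (Suc t))) (sets (OmP Om (Suc t)))"
    by (rule sets.sigma_algebra_axioms)
  have sets: "sets (kprod Om q (Suc t)) = sets (OmP Om (Suc t))"
    by (simp add: kcomp_def sigma_algebra.sets_measure_of_eq[OF sa])
  have SKt: "SK Om (Suc t) ?p" using SKq Suc.prems by auto
  have mu_le: "?mu A \<le> 1" for A
  proof -
    have "?mu A \<le> (\<integral>\<^sup>+ w. 1 \<partial>(completion ?P))"
    proof (rule nn_integral_mono)
      fix w assume w: "w \<in> space (completion ?P)"
      hence "w \<in> space (OmP Om (Suc t - 1))" using spP by simp
      hence pr: "?p w \<in> probs (OmS Om (Suc t))" using SKt unfolding SK_def by blast
      then interpret prob_space "?p w" unfolding probs_def by simp
      have "(\<integral>\<^sup>+ y. indicator A (w(Suc t := y)) \<partial>(?p w)) \<le> (\<integral>\<^sup>+ y. 1 \<partial>(?p w))"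
        by (rule nn_integral_mono) (simp add: indicator_def)
      also have "\<dots> = 1" by (simp add: emeasure_space_1)
      finally show "(\<integral>\<^sup>+ y. indicator A (w(Suc t := y)) \<partial>(?p w)) \<le> 1" .
    qed
    also have "\<dots> = emeasure ?P (space ?P)" by (simp add: emeasure_completion)
    also have "\<dots> \<le> 1" by (rule IH(2))
    finally show ?thesis .
  qed
  have "emeasure (kprod Om q (Suc t)) (space (kprod Om q (Suc t))) \<le> 1"
    by (simp add: kcomp_def emeasure_measure_of_conv mu_le)
  with sets show ?case by simp
qed

lemma QT_props:
  assumes "P \<in> QT Om T Qs"
  shows "sets P = sets (OmP Om T) \<and> emeasure P (space P) \<le> 1"
proof -
  from assms obtain q where P: "P = kprod Om q T" and q: "\<forall>t\<in>{1..T}. SK Om t (q t)"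
    unfolding QT_def by blast
  show ?thesis using kprod_props[OF q, of T] P by simp
qed

lemma sets_univ: "sets (univ M) = sigma_sets (space M) (univ_sets M)"
  unfolding univ_def by (rule sets_measure_of) (auto simp: univ_sets_def)

lemma space_univ[simp]: "space (univ M) = space M"
  unfolding univ_def by (rule space_measure_of) (auto simp: univ_sets_def)

lemma univ_sub_completion:
  assumes sP: "sets P = sets M" and le: "emeasure P (space P) \<le> 1"
  shows "sets (univ M) \<subseteq> sets (completion P)"
proof -
  have sp: "space P = space M" using sP by (rule sets_eq_imp_space_eq)
  have sub: "univ_sets M \<subseteq> sets (completion P)"
  proof
    fix A assume A: "A \<in> univ_sets M"
    hence As: "A \<subseteq> space M" by (simp add: univ_sets_def)
    show "A \<in> sets (completion P)"
    proof (cases "emeasure P (space P) = 0")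
      case True
      hence "space P \<in> null_sets P" by auto
      then show ?thesis using As sp by (intro null_sets_completion[of "space P"]) auto
    next
      case False
      obtain r where r: "emeasure P (space P) = ennreal r" "r \<ge> 0"
        using le by (cases "emeasure P (space P)") (auto simp: top_unique)
      have rpos: "r > 0" using False r by (auto simp: ennreal_eq_0_iff)
      define P' where "P' = scale_measure (ennreal (1/r)) P"
      have "emeasure P' (space P') = ennreal (1/r) * ennreal r"
        by (simp add: P'_def space_scale_measure r)
      also have "\<dots> = 1" using rpos by (simp add: ennreal_mult[symmetric])
      finally have "prob_space P'" by (intro prob_spaceI)
      moreover have "sets P' = sets M" by (simp add: P'_def sP)
      ultimately have "P' \<in> probs M" by (simp add: probs_def)
      hence A': "A \<in> sets (completion P')" using A by (simp add: univ_sets_def)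
      have ns: "null_sets P' = null_sets P"
        using rpos by (auto simp: P'_def null_sets_def ennreal_eq_0_iff)
      have sPP: "sets P' = sets P" by (simp add: P'_def)
      show ?thesis using A' by (simp add: sets_completion ns sPP)
    qed
  qed
  have "sigma_algebra (space (completion P)) (sets (completion P))"
    by (rule sets.sigma_algebra_axioms)
  hence "sigma_sets (space M) (univ_sets M) \<subseteq> sets (completion P)"
    using sub sp by (simp add: sigma_algebra.sigma_sets_subset)
  then show ?thesis by (simp add: sets_univ)
qed

lemma univ_meas_completion:
  assumes f: "f \<in> measurable (univ M) K" and sP: "sets P = sets M" and le: "emeasure P (space P) \<le> 1"
  shows "f \<in> measurable (completion P) K"
proof -
  have sp: "space P = space M" using sP by (rule sets_eq_imp_space_eq)
  have sub: "sets (univ M) \<subseteq> sets (completion P)" by (rule univ_sub_completion[OF sP le])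
  show ?thesis using f sub sp unfolding measurable_def by auto
qed

lemma probs_sub_completion:
  assumes "P \<in> probs M" shows "sets (univ M) \<subseteq> sets (completion P)"
proof -
  from assms have "prob_space P" "sets P = sets M" by (auto simp: probs_def)
  then show ?thesis by (intro univ_sub_completion) (auto simp: prob_space.emeasure_space_1)
qed

lemma univ_compose:
  assumes r: "r \<in> measurable M N" and f: "f \<in> measurable (univ N) K"
  shows "(\<lambda>w. f (r w)) \<in> measurable (univ M) K"
proof (rule measurableI)
  fix w assume "w \<in> space (univ M)"
  then show "f (r w) \<in> space K" using measurable_space[OF r] measurable_space[OF f] by auto
next
  fix B assume B: "B \<in> sets K"
  let ?X = "f -` B \<inter> space N"
  have X: "?X \<in> sets (univ N)" using measurable_sets[OF f B] by simp
  have eq: "(\<lambda>w. f (r w)) -` B \<inter> space (univ M) = r -` ?X \<inter> space M"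
    using measurable_space[OF r] by auto
  have "r -` ?X \<inter> space M \<in> univ_sets M"
    unfolding univ_sets_def
  proof safe
    fix P assume P: "P \<in> probs M"
    hence ps: "prob_space P" and sP: "sets P = sets M" by (auto simp: probs_def)
    have rP: "r \<in> measurable P N" using r sP by (simp cong: measurable_cong_sets)
    have rcP: "r \<in> measurable (completion P) N" using rP by (rule measurable_completion)
    let ?Q = "distr P N r"
    have "prob_space ?Q" using ps rP by (simp add: prob_space.prob_space_distr)
    hence "?Q \<in> probs N" by (simp add: probs_def)
    hence "?X \<in> sets (completion ?Q)" using X probs_sub_completion by blast
    then obtain S0 N0 N' where X: "?X = S0 \<union> N0" "N0 \<subseteq> N'" "N' \<in> null_sets ?Q" "S0 \<in> sets ?Q"
      by (rule sets_completionE)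
    have spP: "space P = space M" using sP by (rule sets_eq_imp_space_eq)
    have N'N: "N' \<in> sets N" using X(3) by (auto simp: null_sets_def)
    have S0N: "S0 \<in> sets N" using X(4) by simp
    have "emeasure P (r -` N' \<inter> space P) = emeasure ?Q N'"
      using N'N rP by (simp add: emeasure_distr)
    hence null: "r -` N' \<inter> space P \<in> null_sets P"
      using X(3) measurable_sets[OF rP N'N] by (auto simp: null_sets_def)
    have "r -` ?X \<inter> space P = (r -` S0 \<inter> space P) \<union> (r -` N0 \<inter> space P)"
      using X(1) by auto
    moreover have "r -` N0 \<inter> space P \<subseteq> r -` N' \<inter> space P" using X(2) by auto
    ultimately have "r -` ?X \<inter> space P \<in> sets (completion P)"
      using null measurable_sets[OF rP S0N] by (intro sets_completionI) auto
    then show "r -` ?X \<inter> space M \<in> sets (completion P)"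
      using spP by simp
  qed
  then have "r -` ?X \<inter> space M \<in> sets (univ M)"
    unfolding sets_univ by (rule sigma_sets.Basic)
  then show "(\<lambda>w. f (r w)) -` B \<inter> space (univ M) \<in> sets (univ M)"
    by (simp only: eq)
qed

definition ue :: "(real \<Rightarrow> real) \<Rightarrow> ereal \<Rightarrow> ereal" where
  "ue f y = (if y < 0 then -\<infinity>
      else if y = 0 then Lim (at_right (0::real)) (\<lambda>z. ereal (f z))
      else if y = \<infinity> then Lim at_top (\<lambda>z. ereal (f z))
      else ereal (f (real_of_ereal y)))"

lemma Uext_ue: "Uext U w y = ue (U w) y"
  by (simp add: Uext_def ue_def)

locale util =
  fixes f :: "real \<Rightarrow> real"
  assumes sm: "strict_mono_on {0<..} f"
    and cv: "concave_on {0<..} f"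
    and ct: "continuous_on {0<..} f"
begin

lemma mono': "0 < a \<Longrightarrow> a \<le> b \<Longrightarrow> f a \<le> f b"
  using strict_mono_onD[OF sm, of a b] by (cases "a = b") auto

definition "L0 = (INF z\<in>{0::real<..}. ereal (f z))"
definition "Lt = (SUP z\<in>{0::real<..}. ereal (f z))"

lemma L0_le: "z > 0 \<Longrightarrow> L0 \<le> ereal (f z)"
  unfolding L0_def by (rule INF_lower) auto

lemma Lt_ge: "z > 0 \<Longrightarrow> ereal (f z) \<le> Lt"
  unfolding Lt_def by (rule SUP_upper) auto

lemma L0_tendsto: "((\<lambda>z. ereal (f z)) \<longlongrightarrow> L0) (at_right 0)"
proof (rule order_tendstoI)
  fix a assume "a < L0"
  then have "\<forall>z>0. a < ereal (f z)"
    using L0_le by (auto intro: less_le_trans)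
  then show "eventually (\<lambda>z. a < ereal (f z)) (at_right 0)"
    using eventually_at_right_real[of 0 1] by (auto elim: eventually_mono)
next
  fix a assume "L0 < a"
  then obtain z0 where z0: "z0 > 0" "ereal (f z0) < a"
    unfolding L0_def by (auto simp: INF_less_iff)
  have "eventually (\<lambda>z. z \<in> {0<..<z0}) (at_right 0)" by (rule eventually_at_right_real) fact
  then show "eventually (\<lambda>z. ereal (f z) < a) (at_right 0)"
  proof (rule eventually_mono)
    fix z assume "z \<in> {0<..<z0}"
    then have "f z \<le> f z0" using mono'[of z z0] by auto
    then show "ereal (f z) < a" using z0 by (meson ereal_less_eq(3) order_le_less_trans)
  qed
qed

lemma Lt_tendsto: "((\<lambda>z. ereal (f z)) \<longlongrightarrow> Lt) at_top"
proof (rule order_tendstoI)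
  fix a assume "Lt < a"
  then have "\<forall>z>0. ereal (f z) < a"
    using Lt_ge by (auto intro: le_less_trans)
  then show "eventually (\<lambda>z. ereal (f z) < a) at_top"
    by (auto simp: eventually_at_top_linorder intro!: exI[of _ 1])
next
  fix a assume "a < Lt"
  then obtain z0 where z0: "z0 > 0" "a < ereal (f z0)"
    unfolding Lt_def by (auto simp: less_SUP_iff)
  show "eventually (\<lambda>z. a < ereal (f z)) at_top"
    unfolding eventually_at_top_linorder
  proof (intro exI allI impI)
    fix z assume "z0 \<le> z"
    then have "f z0 \<le> f z" using mono'[of z0 z] z0 by auto
    then show "a < ereal (f z)" using z0 by (meson ereal_less_eq(3) less_le_trans)
  qed
qed

lemma Lim0: "Lim (at_right 0) (\<lambda>z. ereal (f z)) = L0"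
  by (rule tendsto_Lim) (auto simp: L0_tendsto)

lemma LimT: "Lim at_top (\<lambda>z. ereal (f z)) = Lt"
  by (rule tendsto_Lim) (auto simp: Lt_tendsto)

lemma ue_simps:
  "y < 0 \<Longrightarrow> ue f y = -\<infinity>" "ue f 0 = L0" "ue f \<infinity> = Lt" "r > 0 \<Longrightarrow> ue f (ereal r) = ereal (f r)"
  by (auto simp: ue_def Lim0 LimT)


lemma L0_Lt: "L0 \<le> Lt" using L0_le[of 1] Lt_ge[of 1] by simp

lemma ue_mono: "a \<le> b \<Longrightarrow> ue f a \<le> ue f b"
proof -
  assume ab: "a \<le> b"
  show ?thesis
  proof (cases "a < 0")
    case True then show ?thesis by (simp add: ue_simps)
  next
    case False
    then have a0: "a \<ge> 0" by simp
    show ?thesis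
    proof (cases "b = \<infinity>")
      case True
      show ?thesis
      proof (cases a rule: ereal_cases)
        case (real r) then show ?thesis using True a0 L0_Lt Lt_ge[of r]
          by (cases "r = 0") (auto simp: ue_simps zero_ereal_def[symmetric])
      qed (use True L0_Lt in \<open>auto simp: ue_simps\<close>)
    next
      case False
      then obtain rb where rb: "b = ereal rb" using ab a0 by (cases b) auto
      obtain ra where ra: "a = ereal ra" using ab rb a0 by (cases a) auto
      show ?thesis
        using ab a0 rb ra mono'[of ra rb] L0_le[of rb]
        by (cases "ra = 0"; cases "rb = 0") (auto simp: ue_simps zero_ereal_def[symmetric])
    qed
  qed
qed

lemma ue_not_inf: "y \<noteq> \<infinity> \<Longrightarrow> ue f y \<noteq> \<infinity>"
  using L0_le[of 1] by (cases y) (auto simp: ue_def Lim0)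

lemma ue_le_Lt: "ue f y \<le> Lt"
  using ue_mono[of y \<infinity>] by (simp add: ue_simps)

lemma E1a:
  fixes x L :: ereal
  assumes "0 < l" "l < 1" "x \<le> L"
  shows "ereal l * x + ereal (1-l) * L \<le> L"
proof (cases L)
  case (real c)
  show ?thesis
  proof (cases x)
    case (real d)
    have "l * d \<le> l * c" using assms real \<open>L = ereal c\<close> by (intro mult_left_mono) auto
    then show ?thesis using real \<open>L = ereal c\<close> by (simp add: algebra_simps)
  qed (use assms real in auto)
next
  case PInf then show ?thesis using assms by simp
next
  case MInf then show ?thesis using assms by simp
qed

lemma E1:
  fixes x L :: ereal
  assumes "0 < l" "l < 1" "x \<le> L"
  shows "ereal l * x + ereal (1-l) * L \<le> L" "ereal l * L + ereal (1-l) * x \<le> L"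
  using E1a[OF assms] E1a[of "1-l" x L] assms by (auto simp: add.commute)

lemma key0:
  assumes l: "0 < l" "l < 1" and rb: "rb > 0"
  shows "ereal l * L0 + ereal (1-l) * ereal (f rb) \<le> ereal (f ((1-l) * rb))"
proof (cases L0)
  case (real c)
  have "l * c + (1-l) * f rb \<le> f ((1-l) * rb)"
  proof (rule tendsto_lowerbound)
    have "isCont f ((1-l) * rb)"
      using ct l rb by (subst (asm) continuous_on_eq_continuous_at) auto
    moreover have "((\<lambda>e. (1-l) * rb + l * e) \<longlongrightarrow> (1-l) * rb + l * 0) (at_right 0)"
      by (intro tendsto_intros)
    ultimately show "((\<lambda>e. f ((1-l) * rb + l * e)) \<longlongrightarrow> f ((1-l) * rb)) (at_right 0)"
      using isCont_tendsto_compose by fastforce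
    show "eventually (\<lambda>e. l * c + (1-l) * f rb \<le> f ((1-l) * rb + l * e)) (at_right 0)"
      using eventually_at_right_real[of 0 rb, OF rb]
    proof (rule eventually_mono)
      fix e assume e: "e \<in> {0<..<rb}"
      have "c \<le> f e" using L0_le[of e] e real by auto
      hence "l * c \<le> l * f e" using l by simp
      moreover have "(1 - (1-l)) * f e + (1-l) * f rb \<le> f ((1 - (1-l)) *\<^sub>R e + (1-l) *\<^sub>R rb)"
        by (rule concave_onD[OF cv]) (use l e rb in auto)
      ultimately show "l * c + (1-l) * f rb \<le> f ((1-l) * rb + l * e)"
        by (simp add: algebra_simps)
    qed
    show "\<not> trivial_limit (at_right (0::real))" by simp
  qed
  then show ?thesis using real by simp
next
  case PInf then show ?thesis using L0_le[of 1] by simp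
qed (use l in simp)

lemma ue_conc:
  assumes l: "0 < l" "l < 1"
  shows "ereal l * ue f a + ereal (1-l) * ue f b \<le> ue f (ereal l * a + ereal (1-l) * b)"
proof -
  have l1: "0 < 1 - l" "1 - l < 1" using l by auto
  consider "b = \<infinity>" | "a = \<infinity>" | "a \<noteq> \<infinity>" "b \<noteq> \<infinity>" "a < 0 \<or> b < 0"
    | "a \<noteq> \<infinity>" "b \<noteq> \<infinity>" "a \<ge> 0" "b \<ge> 0"
    by (metis linorder_not_le)
  then show ?thesis
  proof cases
    case 1
    have eq: "ereal l * a + ereal (1-l) * b = \<infinity>" using 1 l by simp
    have u: "ue f (ereal l * a + ereal (1-l) * b) = Lt" by (simp only: eq ue_simps(3))
    have ub: "ue f b = Lt" using 1 by (simp add: ue_simps)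
    show ?thesis unfolding u ub by (rule E1(1)[OF l ue_le_Lt])
  next
    case 2
    have eq: "ereal l * a + ereal (1-l) * b = \<infinity>" using 2 l by simp
    have u: "ue f (ereal l * a + ereal (1-l) * b) = Lt" by (simp only: eq ue_simps(3))
    have ua: "ue f a = Lt" using 2 by (simp add: ue_simps)
    show ?thesis unfolding u ua by (rule E1(2)[OF l ue_le_Lt])
  next
    case 3
    have "ue f a \<noteq> \<infinity>" "ue f b \<noteq> \<infinity>" using 3 ue_not_inf by auto
    show ?thesis
    proof (cases "a < 0")
      case True
      have "ereal (1-l) * ue f b \<noteq> \<infinity>" using \<open>ue f b \<noteq> \<infinity>\<close> l by (cases "ue f b") auto
      then show ?thesis using True l by (cases "ereal (1-l) * ue f b") (auto simp: ue_simps)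
    next
      case False
      hence "b < 0" using 3 by simp
      have "ereal l * ue f a \<noteq> \<infinity>" using \<open>ue f a \<noteq> \<infinity>\<close> l by (cases "ue f a") auto
      then show ?thesis using \<open>b < 0\<close> l by (cases "ereal l * ue f a") (auto simp: ue_simps)
    qed
  next
    case 4
    obtain ra rb where 4: "a = ereal ra" "b = ereal rb" "ra \<ge> 0" "rb \<ge> 0"
      using 4 by (cases a; cases b) auto
    have eq: "ereal l * a + ereal (1-l) * b = ereal (l * ra + (1-l) * rb)" using 4 by simp
    show ?thesis
    proof (cases "ra = 0")
      case True
      show ?thesis
      proof (cases "rb = 0")
        case True
        then show ?thesis using \<open>ra = 0\<close> 4 E1(1)[OF l order_refl[of L0]]
          by (simp add: ue_simps zero_ereal_def[symmetric])
      next
        case False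
        then show ?thesis using \<open>ra = 0\<close> 4 key0[OF l, of rb] l
          by (simp add: ue_simps zero_ereal_def[symmetric] mult.commute)
      qed
    next
      case False
      show ?thesis
      proof (cases "rb = 0")
        case True
        then show ?thesis using \<open>ra \<noteq> 0\<close> 4 key0[OF l1, of ra] l
          by (simp add: ue_simps zero_ereal_def[symmetric] mult.commute add.commute)
      next
        case False
        have "(1 - (1-l)) * f ra + (1-l) * f rb \<le> f ((1 - (1-l)) *\<^sub>R ra + (1-l) *\<^sub>R rb)"
          by (rule concave_onD[OF cv]) (use l 4 False \<open>ra \<noteq> 0\<close> in auto)
        moreover have "l * ra + (1-l) * rb > 0"
          using l 4 False \<open>ra \<noteq> 0\<close> by (simp add: add_pos_nonneg)
        ultimately show ?thesis using 4 False \<open>ra \<noteq> 0\<close> l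
          by (simp add: ue_simps)
      qed
    qed
  qed
qed

end

lemma cara_meas:
  fixes U :: "'b \<Rightarrow> real \<Rightarrow> real"
  assumes Um: "\<And>y. y > 0 \<Longrightarrow> (\<lambda>w. U w y) \<in> borel_measurable M"
    and Uc: "\<And>w. w \<in> space M \<Longrightarrow> continuous_on {0<..} (U w)"
    and g: "g \<in> borel_measurable M" and gpos: "\<And>w. w \<in> space M \<Longrightarrow> g w > 0"
  shows "(\<lambda>w. U w (g w)) \<in> borel_measurable M"
proof (rule borel_measurable_LIMSEQ_real[where u="\<lambda>n w. U w (real_of_int \<lceil>real (Suc n) * g w\<rceil> / real (Suc n))"])
  fix n
  define h where "h k w = U w (if k \<ge> 1 then real_of_int k / real (Suc n) else 1)" for k :: int and w
  have hm: "(\<lambda>w. h k w) \<in> borel_measurable M" for k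
    unfolding h_def by (rule Um) auto
  have "(\<lambda>w. real (Suc n) * g w) \<in> borel_measurable M" using g by simp
  hence cm: "(\<lambda>w. \<lceil>real (Suc n) * g w\<rceil>) \<in> measurable M (count_space UNIV)"
    by (rule measurable_compose[OF _ measurable_real_ceiling])
  have "(\<lambda>w. h \<lceil>real (Suc n) * g w\<rceil> w) \<in> borel_measurable M"
    by (rule measurable_compose_countable[OF hm cm])
  moreover have "h \<lceil>real (Suc n) * g w\<rceil> w = U w (real_of_int \<lceil>real (Suc n) * g w\<rceil> / real (Suc n))"
    if "w \<in> space M" for w
    using gpos[OF that] by (simp add: h_def)
  ultimately show "(\<lambda>w. U w (real_of_int \<lceil>real (Suc n) * g w\<rceil> / real (Suc n))) \<in> borel_measurable M"
    by (simp cong: measurable_cong)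
next
  fix w assume w: "w \<in> space M"
  let ?x = "g w"
  have "(\<lambda>n. real_of_int \<lceil>real (Suc n) * ?x\<rceil> / real (Suc n)) \<longlonglongrightarrow> ?x"
  proof (rule tendsto_sandwich[where f="\<lambda>n. ?x" and h="\<lambda>n. ?x + inverse (real (Suc n))"])
    show "eventually (\<lambda>n. ?x \<le> real_of_int \<lceil>real (Suc n) * ?x\<rceil> / real (Suc n)) sequentially"
    proof (intro always_eventually allI)
      fix n
      have "real (Suc n) * ?x \<le> real_of_int \<lceil>real (Suc n) * ?x\<rceil>" by (rule le_of_int_ceiling)
      then show "?x \<le> real_of_int \<lceil>real (Suc n) * ?x\<rceil> / real (Suc n)"
        by (simp add: field_simps)
    qed
    show "eventually (\<lambda>n. real_of_int \<lceil>real (Suc n) * ?x\<rceil> / real (Suc n) \<le> ?x + inverse (real (Suc n))) sequentially"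
    proof (intro always_eventually allI)
      fix n
      have "real_of_int \<lceil>real (Suc n) * ?x\<rceil> \<le> real (Suc n) * ?x + 1" by (rule of_int_ceiling_le_add_one)
      hence "real_of_int \<lceil>real (Suc n) * ?x\<rceil> / real (Suc n) \<le> (real (Suc n) * ?x + 1) / real (Suc n)"
        by (rule divide_right_mono) simp
      also have "(real (Suc n) * ?x + 1) / real (Suc n) = ?x + inverse (real (Suc n))"
        by (simp add: field_simps)
      finally show "real_of_int \<lceil>real (Suc n) * ?x\<rceil> / real (Suc n) \<le> ?x + inverse (real (Suc n))" .
    qed
    show "(\<lambda>n. ?x) \<longlonglongrightarrow> ?x" by simp
    show "(\<lambda>n. ?x + inverse (real (Suc n))) \<longlonglongrightarrow> ?x"
      using tendsto_add[OF tendsto_const LIMSEQ_inverse_real_of_nat, of ?x] by simp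
  qed
  moreover have "isCont (U w) ?x"
    using Uc[OF w] gpos[OF w] by (subst (asm) continuous_on_eq_continuous_at) auto
  ultimately show "(\<lambda>n. U w (real_of_int \<lceil>real (Suc n) * ?x\<rceil> / real (Suc n))) \<longlonglongrightarrow> U w ?x"
    using isCont_tendsto_compose by blast
qed

lemma (in util) L0_seq: "L0 = (INF n. ereal (f (1 / real (Suc n))))"
proof (rule antisym)
  show "L0 \<le> (INF n. ereal (f (1 / real (Suc n))))"
    by (rule INF_greatest) (rule L0_le, simp)
  show "(INF n. ereal (f (1 / real (Suc n)))) \<le> L0"
    unfolding L0_def
  proof (rule INF_greatest)
    fix z :: real assume "z \<in> {0<..}"
    then obtain n where n: "inverse (real (Suc n)) < z" using reals_Archimedean by auto
    have "f (1 / real (Suc n)) \<le> f z" using n by (intro mono') (auto simp: field_simps)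
    then show "(INF n. ereal (f (1 / real (Suc n)))) \<le> ereal (f z)"
      by (intro INF_lower2[of n]) auto
  qed
qed

lemma (in util) Lt_seq: "Lt = (SUP n. ereal (f (real (Suc n))))"
proof (rule antisym)
  show "(SUP n. ereal (f (real (Suc n)))) \<le> Lt"
    by (rule SUP_least) (rule Lt_ge, simp)
  show "Lt \<le> (SUP n. ereal (f (real (Suc n))))"
    unfolding Lt_def
  proof (rule SUP_least)
    fix z :: real assume z: "z \<in> {0<..}"
    obtain n where n: "z \<le> real n" using real_arch_simple by auto
    have "f z \<le> f (real (Suc n))" using n z by (intro mono') auto
    then show "ereal (f z) \<le> (SUP n. ereal (f (real (Suc n))))"
      by (intro SUP_upper2[of n]) auto
  qed
qed

lemma Uext_meas:
  fixes U :: "(nat \<Rightarrow> 'a) \<Rightarrow> real \<Rightarrow> real" and F :: "(nat \<Rightarrow> 'a) \<Rightarrow> ereal"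
  assumes Um: "\<And>y. y > 0 \<Longrightarrow> (\<lambda>w. U w y) \<in> borel_measurable M"
    and Uu: "\<And>w. w \<in> space M \<Longrightarrow> util (U w)"
    and F[measurable]: "F \<in> borel_measurable M"
  shows "(\<lambda>w. Uext U w (F w)) \<in> borel_measurable M"
proof -
  define g where "g w = (if 0 < F w \<and> F w < \<infinity> then real_of_ereal (F w) else 1)" for w
  have [measurable]: "g \<in> borel_measurable M" unfolding g_def by measurable
  have gpos: "g w > 0" for w
    unfolding g_def by (cases "F w") auto
  have [measurable]: "(\<lambda>w. U w (g w)) \<in> borel_measurable M"
    by (rule cara_meas[OF Um _ _ gpos]) (auto dest: Uu simp: util_def)
  have m1[measurable]: "(\<lambda>w. ereal (U w (1 / real (Suc n)))) \<in> borel_measurable M" for n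
    using Um[of "1 / real (Suc n)"] by simp
  have m2[measurable]: "(\<lambda>w. ereal (U w (real (Suc n)))) \<in> borel_measurable M" for n
    using Um[of "real (Suc n)"] by simp
  have "(\<lambda>w. if F w < 0 then -\<infinity> else if F w = 0 then (INF n. ereal (U w (1 / real (Suc n))))
       else if F w = \<infinity> then (SUP n. ereal (U w (real (Suc n)))) else ereal (U w (g w))) \<in> borel_measurable M"
    by measurable
  moreover have "Uext U w (F w) = (if F w < 0 then -\<infinity> else if F w = 0 then (INF n. ereal (U w (1 / real (Suc n))))
       else if F w = \<infinity> then (SUP n. ereal (U w (real (Suc n)))) else ereal (U w (g w)))"
    if w: "w \<in> space M" for w
  proof -
    interpret util "U w" by (rule Uu[OF w])
    have e0: "(INF n. ereal (U w (1 / real (Suc n)))) = L0" by (rule L0_seq[symmetric])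
    have e1: "(SUP n. ereal (U w (real (Suc n)))) = Lt" by (rule Lt_seq[symmetric])
    have "ue (U w) (F w) = (if F w < 0 then -\<infinity> else if F w = 0 then L0
       else if F w = \<infinity> then Lt else ereal (U w (g w)))"
    proof (cases "F w")
      case (real r)
      consider "r < 0" | "r = 0" | "r > 0" by linarith
      then show ?thesis
        by cases (auto simp: ue_simps g_def real zero_ereal_def[symmetric])
    qed (auto simp: ue_simps g_def)
    then show ?thesis by (simp only: Uext_ue e0 e1)
  qed
  ultimately show ?thesis by (simp cong: measurable_cong)
qed

lemma ennreal_max0: "ennreal z = ennreal (max z 0)"
  by (cases "z \<ge> 0") (auto simp: ennreal_neg max_def)

lemma pw_real:
  fixes h x y l :: real
  assumes l: "0 < l" "l < 1" and le: "l * x + (1-l) * y \<le> h"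
  shows "ennreal (-h) \<le> ennreal l * ennreal (-x) + ennreal (1-l) * ennreal (-y)"
    and "ennreal (-h) + ennreal l * ennreal x + ennreal (1-l) * ennreal y
         \<le> ennreal h + ennreal l * ennreal (-x) + ennreal (1-l) * ennreal (-y)"
proof -
  have m1: "l * (-x) \<le> l * max (-x) 0" using l by (intro mult_left_mono) auto
  have m2: "(1-l) * (-y) \<le> (1-l) * max (-y) 0" using l by (intro mult_left_mono) auto
  have p1: "0 \<le> l * max (-x) 0" "0 \<le> (1-l) * max (-y) 0" "0 \<le> l * max x 0" "0 \<le> (1-l) * max y 0"
    using l by auto
  have "max (-h) 0 \<le> l * max (-x) 0 + (1-l) * max (-y) 0"
  proof -
    have a: "-h \<le> l * (-x) + (1-l) * (-y)" using le by (simp add: algebra_simps)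
    show ?thesis by (rule max.boundedI) (use a m1 m2 p1 in linarith)+
  qed
  hence "ennreal (max (-h) 0) \<le> ennreal (l * max (-x) 0 + (1-l) * max (-y) 0)"
    by (rule ennreal_leI)
  also have "\<dots> = ennreal l * ennreal (max (-x) 0) + ennreal (1-l) * ennreal (max (-y) 0)"
    using l p1 by (simp add: ennreal_mult)
  finally show "ennreal (-h) \<le> ennreal l * ennreal (-x) + ennreal (1-l) * ennreal (-y)"
    by (metis ennreal_max0)
  have i1: "l * max x 0 = l * max (-x) 0 + l * x" by (simp add: max_def algebra_simps)
  have i2: "(1-l) * max y 0 = (1-l) * max (-y) 0 + (1-l) * y" by (simp add: max_def algebra_simps)
  have i3: "max (-h) 0 = max h 0 - h" by (simp add: max_def)
  have "max (-h) 0 + l * max x 0 + (1-l) * max y 0 \<le> max h 0 + l * max (-x) 0 + (1-l) * max (-y) 0"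
    using i1 i2 i3 le by linarith
  hence "ennreal (max (-h) 0 + l * max x 0 + (1-l) * max y 0)
      \<le> ennreal (max h 0 + l * max (-x) 0 + (1-l) * max (-y) 0)"
    using p1 by (intro ennreal_leI) 
  also have "\<dots> = ennreal (max h 0) + ennreal l * ennreal (max (-x) 0) + ennreal (1-l) * ennreal (max (-y) 0)"
    using l p1 by (simp add: ennreal_mult)
  finally have "ennreal (max (-h) 0) + ennreal l * ennreal (max x 0) + ennreal (1-l) * ennreal (max y 0)
      \<le> ennreal (max h 0) + ennreal l * ennreal (max (-x) 0) + ennreal (1-l) * ennreal (max (-y) 0)"
    using l p1 by (simp add: ennreal_mult)
  then show "ennreal (-h) + ennreal l * ennreal x + ennreal (1-l) * ennreal y
         \<le> ennreal h + ennreal l * ennreal (-x) + ennreal (1-l) * ennreal (-y)"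
    by (metis ennreal_max0)
qed

lemma pw:
  fixes a1 a2 hh :: ereal
  assumes l: "0 < l" "l < 1" and le: "ereal l * a1 + ereal (1-l) * a2 \<le> hh"
  shows "e2ennreal (-hh) \<le> ennreal l * e2ennreal (-a1) + ennreal (1-l) * e2ennreal (-a2)"
    and "e2ennreal (-hh) + ennreal l * e2ennreal a1 + ennreal (1-l) * e2ennreal a2
         \<le> e2ennreal hh + ennreal l * e2ennreal (-a1) + ennreal (1-l) * e2ennreal (-a2)"
proof -
  have l0: "ennreal l \<noteq> 0" "ennreal (1-l) \<noteq> 0" using l by auto
  have "e2ennreal (-hh) \<le> ennreal l * e2ennreal (-a1) + ennreal (1-l) * e2ennreal (-a2) \<and>
    e2ennreal (-hh) + ennreal l * e2ennreal a1 + ennreal (1-l) * e2ennreal a2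
         \<le> e2ennreal hh + ennreal l * e2ennreal (-a1) + ennreal (1-l) * e2ennreal (-a2)"
  proof (cases hh)
    case (real h)
    show ?thesis
    proof (cases a1)
      case (real x)
      show ?thesis
      proof (cases a2)
        case (real y)
        have "l * x + (1-l) * y \<le> h" using le \<open>hh = ereal h\<close> \<open>a1 = ereal x\<close> real by simp
        then show ?thesis using pw_real[OF l] \<open>hh = ereal h\<close> \<open>a1 = ereal x\<close> real by simp
      qed (use le l l0 \<open>hh = ereal h\<close> real in \<open>auto simp: ennreal_top_mult\<close>)
    qed (use le l l0 \<open>hh = ereal h\<close> in \<open>cases a2; auto simp: ennreal_top_mult\<close>)+
  next
    case PInf
    then show ?thesis using le l l0
      by (cases a1; cases a2; auto simp: ennreal_top_mult e2ennreal_neg)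
  next
    case MInf
    then show ?thesis using le l l0
      by (cases a1; cases a2; auto simp: ennreal_top_mult e2ennreal_neg)
  qed
  then show "e2ennreal (-hh) \<le> ennreal l * e2ennreal (-a1) + ennreal (1-l) * e2ennreal (-a2)"
    "e2ennreal (-hh) + ennreal l * e2ennreal a1 + ennreal (1-l) * e2ennreal a2
         \<le> e2ennreal hh + ennreal l * e2ennreal (-a1) + ennreal (1-l) * e2ennreal (-a2)" by auto
qed

lemma Ex_mono:
  assumes "AE w in completion P. f w \<le> g w"
  shows "Ex P f \<le> Ex P g"
proof -
  have "AE w in completion P. e2ennreal (f w) \<le> e2ennreal (g w)"
    using assms by eventually_elim (rule e2ennreal_mono)
  then have p: "Epos P f \<le> Epos P g" unfolding Epos_def by (rule nn_integral_mono_AE)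
  have "AE w in completion P. e2ennreal (- g w) \<le> e2ennreal (- f w)"
    using assms by eventually_elim (rule e2ennreal_mono, simp)
  then have n: "Eneg P g \<le> Eneg P f" unfolding Eneg_def by (rule nn_integral_mono_AE)
  show ?thesis
  proof (cases "Epos P f = \<infinity> \<and> Eneg P f = \<infinity>")
    case True then show ?thesis by (simp add: Ex_def)
  next
    case False
    show ?thesis
    proof (cases "Epos P g = \<infinity> \<and> Eneg P g = \<infinity>")
      case True
      hence "Eneg P f = \<infinity>" using n by (simp add: top_unique)
      hence "Epos P f \<noteq> \<infinity>" using False by simp
      then show ?thesis using \<open>Eneg P f = \<infinity>\<close> True
        by (cases "Epos P f") (auto simp: Ex_def)
    next
      case False2: False
      have "enn2ereal (Epos P f) \<le> enn2ereal (Epos P g)" using p by (simp add: less_eq_ennreal.rep_eq)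
      moreover have "enn2ereal (Eneg P g) \<le> enn2ereal (Eneg P f)" using n by (simp add: less_eq_ennreal.rep_eq)
      moreover have "Ex P f = enn2ereal (Epos P f) - enn2ereal (Eneg P f)"
        using False unfolding Ex_def by meson
      moreover have "Ex P g = enn2ereal (Epos P g) - enn2ereal (Eneg P g)"
        using False2 unfolding Ex_def by meson
      ultimately show ?thesis by (simp add: ereal_minus_mono)
    qed
  qed
qed

lemma Ex_conc:
  assumes m: "g1 \<in> borel_measurable (completion P)" "g2 \<in> borel_measurable (completion P)"
      "h \<in> borel_measurable (completion P)"
    and l: "0 < l" "l < 1"
    and AE: "AE w in completion P. ereal l * g1 w + ereal (1-l) * g2 w \<le> h w"
    and fin: "Epos P g1 < \<infinity>" "Epos P g2 < \<infinity>"
  shows "ereal l * Ex P g1 + ereal (1-l) * Ex P g2 \<le> Ex P h"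
proof -
  let ?N = "completion P"
  have [measurable]: "g1 \<in> borel_measurable ?N" "g2 \<in> borel_measurable ?N" "h \<in> borel_measurable ?N"
    using m by auto
  have lin: "(\<integral>\<^sup>+ w. ennreal l * u w + ennreal (1-l) * v w \<partial>?N) = ennreal l * integral\<^sup>N ?N u + ennreal (1-l) * integral\<^sup>N ?N v"
    if [measurable]: "u \<in> borel_measurable ?N" "v \<in> borel_measurable ?N" for u v :: "_ \<Rightarrow> ennreal"
    by (simp add: nn_integral_add nn_integral_cmult)
  have lin3: "(\<integral>\<^sup>+ w. z w + ennreal l * u w + ennreal (1-l) * v w \<partial>?N) = integral\<^sup>N ?N z + ennreal l * integral\<^sup>N ?N u + ennreal (1-l) * integral\<^sup>N ?N v"
    if [measurable]: "z \<in> borel_measurable ?N" "u \<in> borel_measurable ?N" "v \<in> borel_measurable ?N" for z u v :: "_ \<Rightarrow> ennreal"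
    by (simp add: nn_integral_add nn_integral_cmult add.assoc)
  have i: "Eneg P h \<le> ennreal l * Eneg P g1 + ennreal (1-l) * Eneg P g2"
  proof -
    have "AE w in ?N. e2ennreal (- h w) \<le> ennreal l * e2ennreal (- g1 w) + ennreal (1-l) * e2ennreal (- g2 w)"
      using AE by eventually_elim (rule pw(1)[OF l])
    then have "Eneg P h \<le> (\<integral>\<^sup>+ w. ennreal l * e2ennreal (- g1 w) + ennreal (1-l) * e2ennreal (- g2 w) \<partial>?N)"
      unfolding Eneg_def by (rule nn_integral_mono_AE)
    also have "\<dots> = ennreal l * Eneg P g1 + ennreal (1-l) * Eneg P g2"
      unfolding Eneg_def by (rule lin) measurable
    finally show ?thesis .
  qed
  have ii: "Eneg P h + ennreal l * Epos P g1 + ennreal (1-l) * Epos P g2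
      \<le> Epos P h + ennreal l * Eneg P g1 + ennreal (1-l) * Eneg P g2"
  proof -
    have ae2: "AE w in ?N. e2ennreal (- h w) + ennreal l * e2ennreal (g1 w) + ennreal (1-l) * e2ennreal (g2 w)
        \<le> e2ennreal (h w) + ennreal l * e2ennreal (- g1 w) + ennreal (1-l) * e2ennreal (- g2 w)"
      using AE by eventually_elim (rule pw(2)[OF l])
    have "Eneg P h + ennreal l * Epos P g1 + ennreal (1-l) * Epos P g2
       = (\<integral>\<^sup>+ w. e2ennreal (- h w) + ennreal l * e2ennreal (g1 w) + ennreal (1-l) * e2ennreal (g2 w) \<partial>?N)"
      unfolding Eneg_def Epos_def by (rule lin3[symmetric]) measurable
    also have "\<dots> \<le> (\<integral>\<^sup>+ w. e2ennreal (h w) + ennreal l * e2ennreal (- g1 w) + ennreal (1-l) * e2ennreal (- g2 w) \<partial>?N)"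
      using ae2 by (rule nn_integral_mono_AE)
    also have "\<dots> = Epos P h + ennreal l * Eneg P g1 + ennreal (1-l) * Eneg P g2"
      unfolding Eneg_def Epos_def by (rule lin3) measurable
    finally show ?thesis .
  qed
  obtain p1 where p1: "Epos P g1 = ennreal p1" "p1 \<ge> 0" using fin(1) by (cases "Epos P g1") auto
  obtain p2 where p2: "Epos P g2 = ennreal p2" "p2 \<ge> 0" using fin(2) by (cases "Epos P g2") auto
  have l0: "ennreal l \<noteq> 0" "ennreal (1-l) \<noteq> 0" "ereal l > 0" "ereal (1-l) > 0" using l by auto
  show ?thesis
  proof (cases "Eneg P g1 = \<infinity> \<or> Eneg P g2 = \<infinity>")
    case True
    then show ?thesis
    proof
      assume "Eneg P g1 = \<infinity>"
      then have "Ex P g1 = -\<infinity>" using p1 by (simp add: Ex_def)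
      moreover have "Ex P g2 \<noteq> \<infinity>" using p2
        by (cases "Eneg P g2") (auto simp: Ex_def)
      ultimately show ?thesis using l by (cases "Ex P g2") auto
    next
      assume "Eneg P g2 = \<infinity>"
      then have "Ex P g2 = -\<infinity>" using p2 by (simp add: Ex_def)
      moreover have "Ex P g1 \<noteq> \<infinity>" using p1
        by (cases "Eneg P g1") (auto simp: Ex_def)
      ultimately show ?thesis using l by (cases "Ex P g1") auto
    qed
  next
    case False
    then obtain n1 n2 where n1: "Eneg P g1 = ennreal n1" "n1 \<ge> 0" and n2: "Eneg P g2 = ennreal n2" "n2 \<ge> 0"
      by (cases "Eneg P g1"; cases "Eneg P g2") auto
    have "Eneg P h \<noteq> \<infinity>"
      using i n1 n2 by (auto simp: top_unique ennreal_mult_eq_top_iff)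
    then obtain nh where nh: "Eneg P h = ennreal nh" "nh \<ge> 0" by (cases "Eneg P h") auto
    have e1: "Ex P g1 = ereal (p1 - n1)" using p1 n1 by (simp add: Ex_def)
    have e2: "Ex P g2 = ereal (p2 - n2)" using p2 n2 by (simp add: Ex_def)
    show ?thesis
    proof (cases "Epos P h")
      case top
      then have "Ex P h = \<infinity>" using nh by (simp add: Ex_def)
      then show ?thesis by simp
    next
      case (real ph)
      have eh: "Ex P h = ereal (ph - nh)" using real nh by (simp add: Ex_def)
      have "ennreal (nh + l * p1 + (1-l) * p2) \<le> ennreal (ph + l * n1 + (1-l) * n2)"
        using ii nh p1 p2 n1 n2 real l by (simp add: ennreal_mult)
      hence "nh + l * p1 + (1-l) * p2 \<le> ph + l * n1 + (1-l) * n2"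
        using real n1 n2 l by (subst (asm) ennreal_le_iff) auto
      then show ?thesis using e1 e2 eh by (simp add: algebra_simps)
    qed
  qed
qed

lemma VT_shift: "VT T S (x + c) \<phi> w = c + VT T S x \<phi> w"
  by (simp add: VT_def)

lemma ineq_shift: "(G w - ereal c \<le> ereal (VT T S x \<phi> w)) \<longleftrightarrow> (G w \<le> ereal (VT T S (x + c) \<phi> w))"
  by (cases "G w") (auto simp: VT_shift)

lemma eqn_shift: "ereal (VT T S x \<phi> w) - (G w - ereal c) = ereal (VT T S (x + c) \<phi> w) - G w"
  by (cases "G w") (auto simp: VT_shift)

lemma AG_shift: "AG Om T Qs S G (x + c) = AG Om T Qs S (\<lambda>w. G w - ereal c) x"
  by (simp add: AG_def ineq_shift)

lemma AUG_shift: "AUG Om T Qs S U G (x + c) = AUG Om T Qs S U (\<lambda>w. G w - ereal c) x"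
  by (simp add: AUG_def AG_shift eqn_shift)

lemma uval_shift: "uval Om T Qs S U G (x + c) = uval Om T Qs S U (\<lambda>w. G w - ereal c) x"
  by (simp add: uval_def AUG_shift eqn_shift)

lemma W0_minus_const: "G \<in> W0 Om T \<Longrightarrow> (\<lambda>w. G w - ereal c) \<in> W0 Om T"
  by (simp add: W0_def)

lemma W0_uminus: "G \<in> W0 Om T \<Longrightarrow> (\<lambda>w. - G w) \<in> W0 Om T"
  by (simp add: W0_def)

lemma A_eq_all:
  assumes A_eq: "\<forall>G\<in>W0 Om T. AUG Om T Qs S U G x = AG Om T Qs S G x"
    and G: "G \<in> W0 Om T"
  shows "AUG Om T Qs S U G y = AG Om T Qs S G y"
proof -
  have y: "y = x + (y - x)" by simp
  show ?thesis
    by (subst (1 2) y, simp only: AUG_shift AG_shift)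
       (rule A_eq[rule_format, OF W0_minus_const[OF G]])
qed

lemma util_U:
  assumes "random_utility Om T U" "w \<in> space (OmP Om T)"
  shows "util (U w)"
proof -
  from assms obtain U1 U2 where cv: "concave_on {0<..} (U w)" and sm: "strict_mono_on {0<..} (U w)"
    and d: "\<forall>y>0. (U w has_real_derivative U1 y) (at y)"
    unfolding random_utility_def by blast
  have "continuous_on {0<..} (U w)"
    using d by (subst continuous_on_eq_continuous_at) (auto intro: DERIV_isCont)
  then show ?thesis using cv sm by (simp add: util_def)
qed

lemma QT_space: "P \<in> QT Om T Qs \<Longrightarrow> space P = space (OmP Om T)"
  by (rule sets_eq_imp_space_eq) (rule conjunct1[OF QT_props])

lemma QT_meas: "P \<in> QT Om T Qs \<Longrightarrow> f \<in> measurable (univ (OmP Om T)) K \<Longrightarrow> f \<in> measurable (completion P) K"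
proof -
  assume P: "P \<in> QT Om T Qs" and f: "f \<in> measurable (univ (OmP Om T)) K"
  from QT_props[OF P] have "sets P = sets (OmP Om T)" "emeasure P (space P) \<le> 1" by auto
  then show ?thesis by (rule univ_meas_completion[OF f])
qed

lemma restr_meas: "J \<subseteq> {1..T} \<Longrightarrow> (\<lambda>w. restrict w J) \<in> measurable (OmP Om T) (PiM J (OmS Om))"
  unfolding OmP_def by (rule measurable_restrict_subset)

lemma VT_meas:
  fixes S :: "nat \<Rightarrow> (nat \<Rightarrow> 'a::polish_space) \<Rightarrow> 'd::euclidean_space"
  assumes S_meas: "\<forall>t\<in>{0..T}. S t \<in> borel_measurable (univ (OmP Om t))"
    and phi: "\<phi> \<in> Strat Om T"
  shows "(\<lambda>w. VT T S y \<phi> w) \<in> borel_measurable (univ (OmP Om T))"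
proof -
  have m1: "(\<lambda>w. \<phi> s (restrict w {1..s - 1})) \<in> borel_measurable (univ (OmP Om T))" if s: "s \<in> {1..T}" for s
  proof -
    have "\<phi> s \<in> borel_measurable (univ (OmP Om (s - 1)))" using phi s by (simp add: Strat_def)
    moreover have "{1..s - 1} \<subseteq> {1..T}" using s by auto
    hence "(\<lambda>w. restrict w {1..s - 1}) \<in> measurable (OmP Om T) (OmP Om (s - 1))"
      using restr_meas[of "{1..s - 1}" T Om] by (simp add: OmP_def)
    ultimately show ?thesis using univ_compose by blast
  qed
  have m2: "(\<lambda>w. S s (restrict w {1..s})) \<in> borel_measurable (univ (OmP Om T))" if s: "s \<in> {0..T}" for s
  proof -
    have "S s \<in> borel_measurable (univ (OmP Om s))" using S_meas s by simp
    moreover have "{1..s} \<subseteq> {1..T}" using s by auto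
    hence "(\<lambda>w. restrict w {1..s}) \<in> measurable (OmP Om T) (OmP Om s)"
      using restr_meas[of "{1..s}" T Om] by (simp add: OmP_def)
    ultimately show ?thesis using univ_compose by blast
  qed
  have m3: "(\<lambda>w. S (s - 1) (restrict w {1..s - 1})) \<in> borel_measurable (univ (OmP Om T))" if s: "s \<in> {1..T}" for s
    using s by (intro m2) auto
  have "(\<lambda>w. inner (\<phi> s (restrict w {1..s - 1}))
       (S s (restrict w {1..s}) - S (s - 1) (restrict w {1..s - 1}))) \<in> borel_measurable (univ (OmP Om T))"
    if s: "s \<in> {1..T}" for s
    using s by (intro borel_measurable_inner m1 borel_measurable_diff m2 m3) auto
  hence "(\<lambda>w. \<Sum>s=1..T. inner (\<phi> s (restrict w {1..s - 1}))
       (S s (restrict w {1..s}) - S (s - 1) (restrict w {1..s - 1}))) \<in> borel_measurable (univ (OmP Om T))"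
    by (rule borel_measurable_sum)
  hence "(\<lambda>w. y + (\<Sum>s=1..T. inner (\<phi> s (restrict w {1..s - 1}))
       (S s (restrict w {1..s}) - S (s - 1) (restrict w {1..s - 1})))) \<in> borel_measurable (univ (OmP Om T))"
    by (rule borel_measurable_add[OF borel_measurable_const])
  then show ?thesis unfolding VT_def .
qed

lemma g_meas:
  fixes S :: "nat \<Rightarrow> (nat \<Rightarrow> 'a::polish_space) \<Rightarrow> 'd::euclidean_space"
  assumes S_meas: "\<forall>t\<in>{0..T}. S t \<in> borel_measurable (univ (OmP Om t))"
    and phi: "\<phi> \<in> Strat Om T" and U_util: "random_utility Om T U"
    and G: "G \<in> W0 Om T" and P: "P \<in> QT Om T Qs"
  shows "(\<lambda>w. Uext U w (ereal (VT T S y \<phi> w) - G w)) \<in> borel_measurable (completion P)"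
proof (rule QT_meas[OF P], rule Uext_meas)
  show "(\<lambda>w. U w r) \<in> borel_measurable (univ (OmP Om T))" if "r > 0" for r
    using U_util that by (simp add: random_utility_def)
  show "util (U w)" if "w \<in> space (univ (OmP Om T))" for w
    using util_U[OF U_util] that by simp
  have "(\<lambda>w. VT T S y \<phi> w) \<in> borel_measurable (univ (OmP Om T))"
    by (rule VT_meas[OF S_meas phi])
  moreover have "G \<in> borel_measurable (univ (OmP Om T))" using G by (simp add: W0_def)
  ultimately show "(\<lambda>w. ereal (VT T S y \<phi> w) - G w) \<in> borel_measurable (univ (OmP Om T))"
    by (rule borel_measurable_ereal_diff[OF borel_measurable_ereal])
qed

lemma uval_mono:
  assumes A_eq: "\<forall>G\<in>W0 Om T. AUG Om T Qs S U G x = AG Om T Qs S G x"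
    and U_util: "random_utility Om T U"
    and G1: "G1 \<in> W0 Om T" and G2: "G2 \<in> W0 Om T"
    and q: "qs (QT Om T Qs) (\<lambda>w. G2 w \<le> G1 w)"
  shows "uval Om T Qs S U G1 y \<le> uval Om T Qs S U G2 y"
  unfolding uval_def
proof (rule SUP_mono)
  fix \<phi> assume \<phi>: "\<phi> \<in> AUG Om T Qs S U G1 y"
  have "\<phi> \<in> AG Om T Qs S G1 y" using \<phi> A_eq_all[OF A_eq G1] by simp
  hence "\<phi> \<in> AG Om T Qs S G2 y"
  proof (simp add: AG_def qs_def, intro ballI)
    fix P assume P: "P \<in> QT Om T Qs" and h: "\<phi> \<in> Strat Om T \<and> (\<forall>P\<in>QT Om T Qs. AE w in completion P. G1 w \<le> ereal (VT T S y \<phi> w))"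
    have a1: "AE w in completion P. G1 w \<le> ereal (VT T S y \<phi> w)" using h P by blast
    have a2: "AE w in completion P. G2 w \<le> G1 w" using q P by (simp add: qs_def)
    from a1 a2 show "AE w in completion P. G2 w \<le> ereal (VT T S y \<phi> w)"
      by eventually_elim (rule order_trans)
  qed
  hence \<phi>2: "\<phi> \<in> AUG Om T Qs S U G2 y" using A_eq_all[OF A_eq G2] by simp
  have "(INF P\<in>QT Om T Qs. Ex P (\<lambda>w. Uext U w (ereal (VT T S y \<phi> w) - G1 w)))
     \<le> (INF P\<in>QT Om T Qs. Ex P (\<lambda>w. Uext U w (ereal (VT T S y \<phi> w) - G2 w)))"
  proof (rule INF_mono)
    fix P assume P: "P \<in> QT Om T Qs"
    have a2: "AE w in completion P. G2 w \<le> G1 w" using q P by (simp add: qs_def)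
    have sp: "space (completion P) = space (OmP Om T)" using QT_space[OF P] by simp
    from AE_space[of "completion P"] a2
    have "AE w in completion P. Uext U w (ereal (VT T S y \<phi> w) - G1 w) \<le> Uext U w (ereal (VT T S y \<phi> w) - G2 w)"
    proof eventually_elim
      fix w assume w: "w \<in> space (completion P)" and le: "G2 w \<le> G1 w"
      interpret util "U w" using util_U[OF U_util] w sp by simp
      show "Uext U w (ereal (VT T S y \<phi> w) - G1 w) \<le> Uext U w (ereal (VT T S y \<phi> w) - G2 w)"
        unfolding Uext_ue by (rule ue_mono) (rule ereal_minus_mono[OF order_refl le])
    qed
    then show "\<exists>P'\<in>QT Om T Qs. Ex P' (\<lambda>w. Uext U w (ereal (VT T S y \<phi> w) - G1 w))
        \<le> Ex P (\<lambda>w. Uext U w (ereal (VT T S y \<phi> w) - G2 w))"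
      by (intro bexI[OF _ P] Ex_mono)
  qed
  then show "\<exists>m\<in>AUG Om T Qs S U G2 y. (INF P\<in>QT Om T Qs. Ex P (\<lambda>w. Uext U w (ereal (VT T S y \<phi> w) - G1 w)))
     \<le> (INF P\<in>QT Om T Qs. Ex P (\<lambda>w. Uext U w (ereal (VT T S y m w) - G2 w)))"
    by (intro bexI[OF _ \<phi>2])
qed

lemma pval_mono:
  assumes "\<And>y. uval Om T Qs S U G1 y \<le> uval Om T Qs S U G2 y"
  shows "pval Om T Qs S U G2 x \<le> pval Om T Qs S U G1 x"
  unfolding pval_def
  by (rule Inf_superset_mono, rule image_mono) (auto intro: order_trans assms)

lemma ereal_addsub: "(a + ereal m) - ereal m = a" "(a - ereal m) + ereal m = (a::ereal)"
  by (cases a; simp)+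

lemma Inf_shift: "Inf (ereal ` ((\<lambda>z. z - m) ` A)) = Inf (ereal ` A) - ereal m"
proof -
  have img: "ereal ` ((\<lambda>z. z - m) ` A) = (\<lambda>e. e - ereal m) ` (ereal ` A)"
    by (auto simp: image_image)
  let ?B = "ereal ` A"
  show ?thesis unfolding img
  proof (rule antisym)
    let ?a = "Inf ((\<lambda>e. e - ereal m) ` ?B)"
    have "?a + ereal m \<le> Inf ?B"
    proof (rule Inf_greatest)
      fix e assume e: "e \<in> ?B"
      have "?a \<le> e - ereal m" using e by (auto intro: Inf_lower)
      hence "?a + ereal m \<le> (e - ereal m) + ereal m" by (rule add_right_mono)
      then show "?a + ereal m \<le> e" by (simp only: ereal_addsub)
    qed
    hence "(?a + ereal m) - ereal m \<le> Inf ?B - ereal m" by (rule ereal_minus_mono) simp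
    then show "?a \<le> Inf ?B - ereal m" by (simp only: ereal_addsub)
  next
    show "Inf ?B - ereal m \<le> Inf ((\<lambda>e. e - ereal m) ` ?B)"
    proof (rule Inf_greatest)
      fix e assume "e \<in> (\<lambda>e. e - ereal m) ` ?B"
      then obtain e' where e': "e' \<in> ?B" "e = e' - ereal m" by auto
      show "Inf ?B - ereal m \<le> e" unfolding e'(2)
        by (rule ereal_minus_mono) (auto intro: Inf_lower e')
    qed
  qed
qed

lemma uval_transl:
  "uval Om T Qs S U (\<lambda>w. - (G w + ereal m)) y = uval Om T Qs S U (\<lambda>w. - G w) (y + m)"
proof -
  have "(\<lambda>w. - (G w + ereal m)) = (\<lambda>w. - G w - ereal m)"
  proof
    fix w show "- (G w + ereal m) = - G w - ereal m" by (cases "G w") auto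
  qed
  then show ?thesis by (simp add: uval_shift)
qed

lemma pval_transl:
  "pval Om T Qs S U (\<lambda>w. - (G w + ereal m)) x = pval Om T Qs S U (\<lambda>w. - G w) x - ereal m"
proof -
  let ?u0 = "uval Om T Qs S U (\<lambda>_. 0) x"
  let ?A = "{z. ?u0 \<le> uval Om T Qs S U (\<lambda>w. - G w) (x + z)}"
  have "{z. ?u0 \<le> uval Om T Qs S U (\<lambda>w. - (G w + ereal m)) (x + z)} = (\<lambda>z. z - m) ` ?A"
  proof (rule set_eqI)
    fix z
    show "z \<in> {z. ?u0 \<le> uval Om T Qs S U (\<lambda>w. - (G w + ereal m)) (x + z)} \<longleftrightarrow> z \<in> (\<lambda>z. z - m) ` ?A"
    proof
      assume "z \<in> {z. ?u0 \<le> uval Om T Qs S U (\<lambda>w. - (G w + ereal m)) (x + z)}"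
      hence "z + m \<in> ?A" by (simp add: uval_transl add.assoc)
      then show "z \<in> (\<lambda>z. z - m) ` ?A" by (rule rev_image_eqI) simp
    next
      assume "z \<in> (\<lambda>z. z - m) ` ?A"
      then obtain z' where "z' \<in> ?A" "z = z' - m" by auto
      then show "z \<in> {z. ?u0 \<le> uval Om T Qs S U (\<lambda>w. - (G w + ereal m)) (x + z)}"
        by (simp add: uval_transl)
    qed
  qed
  then show ?thesis unfolding pval_def by (simp only: Inf_shift)
qed

lemma monetary:
  assumes A_eq: "\<forall>G\<in>W0 Om T. AUG Om T Qs S U G x = AG Om T Qs S G x"
    and U_util: "random_utility Om T U" and X: "X \<subseteq> W0 Om T"
  shows "monetary_risk (QT Om T Qs) X (\<lambda>G. pval Om T Qs S U (\<lambda>w. - G w) x)"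
  unfolding monetary_risk_def
proof (intro conjI ballI allI impI)
  fix G H assume G: "G \<in> X" and H: "H \<in> X" and q: "qs (QT Om T Qs) (\<lambda>w. H w \<le> G w)"
  have q': "qs (QT Om T Qs) (\<lambda>w. - G w \<le> - H w)" using q by (simp add: qs_def)
  have "uval Om T Qs S U (\<lambda>w. - H w) y \<le> uval Om T Qs S U (\<lambda>w. - G w) y" for y
    using G H X by (intro uval_mono[OF A_eq U_util W0_uminus W0_uminus q']) auto
  then show "pval Om T Qs S U (\<lambda>w. - G w) x \<le> pval Om T Qs S U (\<lambda>w. - H w) x"
    by (rule pval_mono)
next
  fix G m
  show "pval Om T Qs S U (\<lambda>w. - (G w + ereal m)) x = pval Om T Qs S U (\<lambda>w. - G w) x - ereal m"
    by (rule pval_transl)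
qed

lemma P1:
  fixes g h :: ereal
  assumes l: "0 < l" "l < 1" and a: "- g \<le> ereal a" and b: "- h \<le> ereal b"
  shows "- (ereal l * g + ereal (1-l) * h) \<le> ereal (l * a + (1-l) * b)"
proof (cases g)
  case (real rg)
  show ?thesis
  proof (cases h)
    case (real rh)
    have "l * (- rg) \<le> l * a" using a l \<open>g = ereal rg\<close> by (intro mult_left_mono) auto
    moreover have "(1-l) * (- rh) \<le> (1-l) * b" using b l real by (intro mult_left_mono) auto
    ultimately show ?thesis using \<open>g = ereal rg\<close> real by (simp add: algebra_simps)
  qed (use l b \<open>g = ereal rg\<close> in auto)
qed (use l a in auto)

lemma P2:
  fixes g h :: ereal
  assumes l: "0 < l" "l < 1"
  shows "ereal l * (ereal a - - g) + ereal (1-l) * (ereal b - - h)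
       = ereal (l * a + (1-l) * b) - - (ereal l * g + ereal (1-l) * h)"
  using l by (cases g; cases h) (auto simp: algebra_simps)

lemma conv_key:
  fixes S :: "nat \<Rightarrow> (nat \<Rightarrow> 'a::polish_space) \<Rightarrow> 'd::euclidean_space"
  assumes A_eq: "\<forall>G\<in>W0 Om T. AUG Om T Qs S U G x = AG Om T Qs S G x"
    and U_util: "random_utility Om T U"
    and S_meas: "\<forall>t\<in>{0..T}. S t \<in> borel_measurable (univ (OmP Om t))"
    and G: "G \<in> W0 Om T" and H: "H \<in> W0 Om T"
    and K: "(\<lambda>w. ereal l * G w + ereal (1-l) * H w) \<in> W0 Om T"
    and l: "0 < l" "l < 1"
    and z1: "uval Om T Qs S U (\<lambda>_. 0) x \<le> uval Om T Qs S U (\<lambda>w. - G w) (x + z1)"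
    and z2: "uval Om T Qs S U (\<lambda>_. 0) x \<le> uval Om T Qs S U (\<lambda>w. - H w) (x + z2)"
  shows "uval Om T Qs S U (\<lambda>_. 0) x
      \<le> uval Om T Qs S U (\<lambda>w. - (ereal l * G w + ereal (1-l) * H w)) (x + (l * z1 + (1-l) * z2))"
proof (rule dense_le)
  fix t assume t: "t < uval Om T Qs S U (\<lambda>_. 0) x"
  let ?y0 = "x + (l * z1 + (1-l) * z2)"
  let ?K = "\<lambda>w. ereal l * G w + ereal (1-l) * H w"
  show "t \<le> uval Om T Qs S U (\<lambda>w. - ?K w) ?y0"
  proof (cases t)
    case MInf then show ?thesis by simp
  next
    case PInf then show ?thesis using t by simp
  next
    case (real c)
    have "ereal c < uval Om T Qs S U (\<lambda>w. - G w) (x + z1)" using t z1 real by simp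
    then obtain \<phi>1 where \<phi>1: "\<phi>1 \<in> AUG Om T Qs S U (\<lambda>w. - G w) (x + z1)"
      and c1: "ereal c < (INF P\<in>QT Om T Qs. Ex P (\<lambda>w. Uext U w (ereal (VT T S (x + z1) \<phi>1 w) - - G w)))"
      unfolding uval_def less_SUP_iff by blast
    have "ereal c < uval Om T Qs S U (\<lambda>w. - H w) (x + z2)" using t z2 real by simp
    then obtain \<phi>2 where \<phi>2: "\<phi>2 \<in> AUG Om T Qs S U (\<lambda>w. - H w) (x + z2)"
      and c2: "ereal c < (INF P\<in>QT Om T Qs. Ex P (\<lambda>w. Uext U w (ereal (VT T S (x + z2) \<phi>2 w) - - H w)))"
      unfolding uval_def less_SUP_iff by blast
    have s1: "\<phi>1 \<in> Strat Om T" and ae1: "\<forall>P\<in>QT Om T Qs. AE w in completion P. - G w \<le> ereal (VT T S (x + z1) \<phi>1 w)"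
      and f1: "\<forall>P\<in>QT Om T Qs. Epos P (\<lambda>w. Uext U w (ereal (VT T S (x + z1) \<phi>1 w) - - G w)) < \<infinity>"
      using \<phi>1 by (auto simp: AUG_def AG_def qs_def)
    have s2: "\<phi>2 \<in> Strat Om T" and ae2: "\<forall>P\<in>QT Om T Qs. AE w in completion P. - H w \<le> ereal (VT T S (x + z2) \<phi>2 w)"
      and f2: "\<forall>P\<in>QT Om T Qs. Epos P (\<lambda>w. Uext U w (ereal (VT T S (x + z2) \<phi>2 w) - - H w)) < \<infinity>"
      using \<phi>2 by (auto simp: AUG_def AG_def qs_def)
    define \<phi> where "\<phi> = (\<lambda>t w. l *\<^sub>R \<phi>1 t w + (1-l) *\<^sub>R \<phi>2 t w)"
    have s: "\<phi> \<in> Strat Om T"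
      unfolding Strat_def
    proof (intro CollectI ballI)
      fix t assume t: "t \<in> {1..T}"
      have m1: "\<phi>1 t \<in> borel_measurable (univ (OmP Om (t - 1)))" using s1 t by (simp add: Strat_def)
      have m2: "\<phi>2 t \<in> borel_measurable (univ (OmP Om (t - 1)))" using s2 t by (simp add: Strat_def)
      have "(\<lambda>w. l *\<^sub>R \<phi>1 t w + (1-l) *\<^sub>R \<phi>2 t w) \<in> borel_measurable (univ (OmP Om (t - 1)))"
        by (rule borel_measurable_add[OF borel_measurable_scaleR[OF borel_measurable_const m1]
              borel_measurable_scaleR[OF borel_measurable_const m2]])
      then show "\<phi> t \<in> borel_measurable (univ (OmP Om (t - 1)))" by (simp add: \<phi>_def)
    qed
    have VT_lin: "VT T S ?y0 \<phi> w = l * VT T S (x + z1) \<phi>1 w + (1-l) * VT T S (x + z2) \<phi>2 w" for w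
    proof -
      define D where "D s = S s (restrict w {1..s}) - S (s - 1) (restrict w {1..s - 1})" for s
      define A1 where "A1 = (\<Sum>s=1..T. inner (\<phi>1 s (restrict w {1..s - 1})) (D s))"
      define A2 where "A2 = (\<Sum>s=1..T. inner (\<phi>2 s (restrict w {1..s - 1})) (D s))"
      have e1: "VT T S (x + z1) \<phi>1 w = (x + z1) + A1" unfolding VT_def A1_def D_def ..
      have e2: "VT T S (x + z2) \<phi>2 w = (x + z2) + A2" unfolding VT_def A2_def D_def ..
      have "VT T S ?y0 \<phi> w = ?y0 + (\<Sum>s=1..T. l * inner (\<phi>1 s (restrict w {1..s - 1})) (D s)
            + (1-l) * inner (\<phi>2 s (restrict w {1..s - 1})) (D s))"
        unfolding VT_def \<phi>_def D_def by (simp only: inner_add_left inner_scaleR_left)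
      also have "\<dots> = ?y0 + l * A1 + (1-l) * A2"
        unfolding A1_def A2_def by (simp only: sum.distrib sum_distrib_left add.assoc)
      finally show ?thesis unfolding e1 e2 by (simp add: algebra_simps)
    qed
    have KW: "(\<lambda>w. - ?K w) \<in> W0 Om T" by (rule W0_uminus[OF K])
    have "\<phi> \<in> AG Om T Qs S (\<lambda>w. - ?K w) ?y0"
      unfolding AG_def qs_def
    proof (intro CollectI conjI s ballI)
      fix P assume P: "P \<in> QT Om T Qs"
      from ae1[rule_format, OF P] ae2[rule_format, OF P]
      show "AE w in completion P. - ?K w \<le> ereal (VT T S ?y0 \<phi> w)"
        by eventually_elim (simp only: VT_lin, rule P1[OF l])
    qed
    hence \<phi>AUG: "\<phi> \<in> AUG Om T Qs S U (\<lambda>w. - ?K w) ?y0" using A_eq_all[OF A_eq KW] by simp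
    have "ereal c \<le> uval Om T Qs S U (\<lambda>w. - ?K w) ?y0"
      unfolding uval_def
    proof (rule SUP_upper2[OF \<phi>AUG], rule INF_greatest)
      fix P assume P: "P \<in> QT Om T Qs"
      let ?g1 = "\<lambda>w. Uext U w (ereal (VT T S (x + z1) \<phi>1 w) - - G w)"
      let ?g2 = "\<lambda>w. Uext U w (ereal (VT T S (x + z2) \<phi>2 w) - - H w)"
      let ?h = "\<lambda>w. Uext U w (ereal (VT T S ?y0 \<phi> w) - - ?K w)"
      have c1P: "ereal c < Ex P ?g1" using less_INF_D[OF c1 P] .
      have c2P: "ereal c < Ex P ?g2" using less_INF_D[OF c2 P] .
      have sp: "space (completion P) = space (OmP Om T)" using QT_space[OF P] by simp
      have ae: "AE w in completion P. ereal l * ?g1 w + ereal (1-l) * ?g2 w \<le> ?h w"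
      proof (rule AE_I2)
        fix w assume w: "w \<in> space (completion P)"
        interpret util "U w" using util_U[OF U_util] w sp by simp
        have "ereal l * (ereal (VT T S (x + z1) \<phi>1 w) - - G w) + ereal (1-l) * (ereal (VT T S (x + z2) \<phi>2 w) - - H w)
            = ereal (VT T S ?y0 \<phi> w) - - ?K w"
          unfolding VT_lin by (rule P2[OF l])
        then show "ereal l * ?g1 w + ereal (1-l) * ?g2 w \<le> ?h w"
          unfolding Uext_ue using ue_conc[OF l] by metis
      qed
      have conc: "ereal l * Ex P ?g1 + ereal (1-l) * Ex P ?g2 \<le> Ex P ?h"
      proof (rule Ex_conc[OF _ _ _ l ae])
        show "?g1 \<in> borel_measurable (completion P)"
          by (rule g_meas[OF S_meas s1 U_util W0_uminus[OF G] P])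
        show "?g2 \<in> borel_measurable (completion P)"
          by (rule g_meas[OF S_meas s2 U_util W0_uminus[OF H] P])
        show "?h \<in> borel_measurable (completion P)"
          by (rule g_meas[OF S_meas s U_util KW P])
        show "Epos P ?g1 < \<infinity>" using f1 P by blast
        show "Epos P ?g2 < \<infinity>" using f2 P by blast
      qed
      have "ereal c = ereal l * ereal c + ereal (1-l) * ereal c" by (simp add: algebra_simps)
      also have "\<dots> \<le> ereal l * Ex P ?g1 + ereal (1-l) * Ex P ?g2"
        using c1P c2P l by (intro add_mono ereal_mult_left_mono) auto
      also have "\<dots> \<le> Ex P ?h" by (rule conc)
      finally show "ereal c \<le> Ex P ?h" .
    qed
    then show ?thesis using real by simp
  qed
qed

lemma Inf_ex: "Inf (ereal ` A) < ereal b \<Longrightarrow> \<exists>z\<in>A. z < b"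
  by (auto simp: Inf_less_iff)

lemma InfComb:
  fixes A1 A2 AK :: "real set"
  assumes l: "0 < l" "l < 1" and comb: "\<And>z1 z2. z1 \<in> A1 \<Longrightarrow> z2 \<in> A2 \<Longrightarrow> l * z1 + (1-l) * z2 \<in> AK"
  shows "Inf (ereal ` AK) \<le> ereal l * Inf (ereal ` A1) + ereal (1-l) * Inf (ereal ` A2)"
proof (cases "A1 = {} \<or> A2 = {}")
  case True
  then show ?thesis using l by (auto simp: top_ereal_def)
next
  case False
  then obtain a1 a2 where a1: "a1 \<in> A1" and a2: "a2 \<in> A2" by auto
  let ?I1 = "Inf (ereal ` A1)" and ?I2 = "Inf (ereal ` A2)"
  have I1: "?I1 \<le> ereal a1" using a1 by (auto intro: Inf_lower)
  have I2: "?I2 \<le> ereal a2" using a2 by (auto intro: Inf_lower)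
  show ?thesis
  proof (rule ccontr)
    assume "\<not> ?thesis"
    hence lt: "ereal l * ?I1 + ereal (1-l) * ?I2 < Inf (ereal ` AK)" by simp
    then obtain r where r1: "ereal l * ?I1 + ereal (1-l) * ?I2 < ereal r" and r2: "ereal r < Inf (ereal ` AK)"
      using ereal_dense2 by blast
    have "\<exists>z1\<in>A1. \<exists>z2\<in>A2. l * z1 + (1-l) * z2 < r"
    proof (cases ?I1)
      case MInf
      have "?I1 < ereal ((r - (1-l) * a2) / l)" using MInf by simp
      then obtain z1 where z1: "z1 \<in> A1" "z1 < (r - (1-l) * a2) / l" using Inf_ex by blast
      have "l * z1 < r - (1-l) * a2" using z1(2) l by (simp add: field_simps)
      hence "l * z1 + (1-l) * a2 < r" by linarith
      then show ?thesis using z1(1) a2 by blast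
    next
      case PInf then show ?thesis using I1 by simp
    next
      case (real i1)
      show ?thesis
      proof (cases ?I2)
        case MInf
        have "?I2 < ereal ((r - l * a1) / (1-l))" using MInf by simp
        then obtain z2 where z2: "z2 \<in> A2" "z2 < (r - l * a1) / (1-l)" using Inf_ex by blast
        have "(1-l) * z2 < r - l * a1" using z2(2) l by (simp add: field_simps)
        hence "l * a1 + (1-l) * z2 < r" by linarith
        then show ?thesis using z2(1) a1 by blast
      next
        case PInf then show ?thesis using I2 by simp
      next
        case (real i2)
        define d where "d = r - (l * i1 + (1-l) * i2)"
        have d: "d > 0" using r1 \<open>?I1 = ereal i1\<close> real by (simp add: d_def)
        have "?I1 < ereal (i1 + d)" using d \<open>?I1 = ereal i1\<close> by simp
        then obtain z1 where z1: "z1 \<in> A1" "z1 < i1 + d" using Inf_ex by blast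
        have "?I2 < ereal (i2 + d)" using d real by simp
        then obtain z2 where z2: "z2 \<in> A2" "z2 < i2 + d" using Inf_ex by blast
        have "l * z1 < l * (i1 + d)" using z1 l by simp
        moreover have "(1-l) * z2 < (1-l) * (i2 + d)" using z2 l by simp
        ultimately have "l * z1 + (1-l) * z2 < r" unfolding d_def by (simp add: algebra_simps)
        then show ?thesis using z1 z2 by auto
      qed
    qed
    then obtain z1 z2 where z: "z1 \<in> A1" "z2 \<in> A2" "l * z1 + (1-l) * z2 < r" by blast
    have "Inf (ereal ` AK) \<le> ereal (l * z1 + (1-l) * z2)"
      using comb[OF z(1,2)] by (auto intro: Inf_lower)
    also have "\<dots> < ereal r" using z(3) by simp
    finally show False using r2 by simp
  qed
qed

lemma normalized:
  assumes d: "\<forall>\<delta>>0. uval Om T Qs S U (\<lambda>_. 0) (x - \<delta>) < uval Om T Qs S U (\<lambda>_. 0) x"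
  shows "pval Om T Qs S U (\<lambda>_. 0) x = 0"
proof -
  let ?A = "{z. uval Om T Qs S U (\<lambda>_. 0) x \<le> uval Om T Qs S U (\<lambda>_. 0) (x + z)}"
  have 0: "0 \<in> ?A" by simp
  have pos: "z \<ge> 0" if "z \<in> ?A" for z
  proof (rule ccontr)
    assume "\<not> z \<ge> 0"
    hence "uval Om T Qs S U (\<lambda>_. 0) (x - (- z)) < uval Om T Qs S U (\<lambda>_. 0) x"
      using d[rule_format, of "- z"] by linarith
    then show False using that by simp
  qed
  have "Inf (ereal ` ?A) = 0"
  proof (rule antisym)
    show "Inf (ereal ` ?A) \<le> 0" using 0 by (metis Inf_lower image_eqI zero_ereal_def)
    show "0 \<le> Inf (ereal ` ?A)" using pos by (auto intro!: Inf_greatest)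
  qed
  then show ?thesis by (simp add: pval_def)
qed

lemma convex_part:
  fixes S :: "nat \<Rightarrow> (nat \<Rightarrow> 'a::polish_space) \<Rightarrow> 'd::euclidean_space"
  assumes A_eq: "\<forall>G\<in>W0 Om T. AUG Om T Qs S U G x = AG Om T Qs S G x"
    and U_util: "random_utility Om T U"
    and S_meas: "\<forall>t\<in>{0..T}. S t \<in> borel_measurable (univ (OmP Om t))"
  shows "convex_risk (QT Om T Qs) {G\<in>W0 Om T. \<forall>z::real. uval Om T Qs S U (\<lambda>w. - G w) z < \<infinity>}
             (\<lambda>G. pval Om T Qs S U (\<lambda>w. - G w) x)"
  unfolding convex_risk_def
proof (intro conjI ballI impI)
  show "monetary_risk (QT Om T Qs) {G\<in>W0 Om T. \<forall>z::real. uval Om T Qs S U (\<lambda>w. - G w) z < \<infinity>}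
             (\<lambda>G. pval Om T Qs S U (\<lambda>w. - G w) x)"
    by (rule monetary[OF A_eq U_util]) auto
next
  fix G H l
  assume G: "G \<in> {G\<in>W0 Om T. \<forall>z::real. uval Om T Qs S U (\<lambda>w. - G w) z < \<infinity>}"
    and H: "H \<in> {G\<in>W0 Om T. \<forall>z::real. uval Om T Qs S U (\<lambda>w. - G w) z < \<infinity>}"
    and l: "l \<in> {0..1::real}"
    and K: "(\<lambda>w. ereal l * G w + ereal (1 - l) * H w) \<in> {G\<in>W0 Om T. \<forall>z::real. uval Om T Qs S U (\<lambda>w. - G w) z < \<infinity>}"
  let ?\<rho> = "\<lambda>G. pval Om T Qs S U (\<lambda>w. - G w) x"
  show "?\<rho> (\<lambda>w. ereal l * G w + ereal (1 - l) * H w) \<le> ereal l * ?\<rho> G + ereal (1 - l) * ?\<rho> H"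
  proof (cases "l = 0 \<or> l = 1")
    case True
    then show ?thesis
    proof
      assume "l = 0"
      then show ?thesis by (simp add: zero_ereal_def[symmetric] one_ereal_def[symmetric])
    next
      assume "l = 1"
      then show ?thesis by (simp add: zero_ereal_def[symmetric] one_ereal_def[symmetric])
    qed
  next
    case False
    hence l01: "0 < l" "l < 1" using l by auto
    let ?u0 = "uval Om T Qs S U (\<lambda>_. 0) x"
    have "Inf (ereal ` {z. ?u0 \<le> uval Om T Qs S U (\<lambda>w. - (ereal l * G w + ereal (1 - l) * H w)) (x + z)})
      \<le> ereal l * Inf (ereal ` {z. ?u0 \<le> uval Om T Qs S U (\<lambda>w. - G w) (x + z)})
       + ereal (1 - l) * Inf (ereal ` {z. ?u0 \<le> uval Om T Qs S U (\<lambda>w. - H w) (x + z)})"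
    proof (rule InfComb[OF l01])
      fix z1 z2
      assume "z1 \<in> {z. ?u0 \<le> uval Om T Qs S U (\<lambda>w. - G w) (x + z)}"
        and "z2 \<in> {z. ?u0 \<le> uval Om T Qs S U (\<lambda>w. - H w) (x + z)}"
      then show "l * z1 + (1 - l) * z2 \<in> {z. ?u0 \<le> uval Om T Qs S U (\<lambda>w. - (ereal l * G w + ereal (1 - l) * H w)) (x + z)}"
        using conv_key[OF A_eq U_util S_meas _ _ _ l01, of G H z1 z2] G H K by simp
    qed
    then show ?thesis by (simp add: pval_def)
  qed
qed

theorem proposition2p17:
  fixes Om :: "nat \<Rightarrow> 'a::polish_space set"
    and T :: nat
    and Qs :: "nat \<Rightarrow> (nat \<Rightarrow> 'a) \<Rightarrow> 'a measure set"
    and S :: "nat \<Rightarrow> (nat \<Rightarrow> 'a) \<Rightarrow> 'd::euclidean_space"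
    and U :: "(nat \<Rightarrow> 'a) \<Rightarrow> real \<Rightarrow> real"
    and x :: real
  assumes T1: "T \<ge> 1"
    and Om_closed: "\<forall>t\<in>{1..T}. closed (Om t)"
    and Qs_probs: "\<forall>t\<in>{1..T}. \<forall>w\<in>space (OmP Om (t - 1)). Qs t w \<subseteq> probs (OmS Om t)"
    and S_meas: "\<forall>t\<in>{0..T}. S t \<in> borel_measurable (univ (OmP Om t))"
    and U_util: "random_utility Om T U"
    and x_nonneg: "x \<ge> 0"
    and A_eq: "\<forall>G\<in>W0 Om T. AUG Om T Qs S U G x = AG Om T Qs S G x"
  shows "monetary_risk (QT Om T Qs) (W0 Om T) (\<lambda>G. pval Om T Qs S U (\<lambda>w. - G w) x)
    \<and> ((\<forall>t\<in>{0..T}. S t \<in> borel_measurable (OmP Om t)) \<and> NA Om T Qs S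
         \<and> uval Om T Qs S U (\<lambda>_. 0) x > -\<infinity>
       \<longrightarrow> convex_risk (QT Om T Qs)
             {G\<in>W0 Om T. \<forall>z::real. uval Om T Qs S U (\<lambda>w. - G w) z < \<infinity>}
             (\<lambda>G. pval Om T Qs S U (\<lambda>w. - G w) x))
    \<and> ((\<forall>t\<in>{0..T}. S t \<in> borel_measurable (OmP Om t)) \<and> NA Om T Qs S
         \<and> uval Om T Qs S U (\<lambda>_. 0) x > -\<infinity>
         \<and> (\<forall>\<delta>>0. uval Om T Qs S U (\<lambda>_. 0) (x - \<delta>) < uval Om T Qs S U (\<lambda>_. 0) x)
       \<longrightarrow> pval Om T Qs S U (\<lambda>w. - (\<lambda>_. 0) w) x = 0)"
proof (intro conjI impI)
  show "monetary_risk (QT Om T Qs) (W0 Om T) (\<lambda>G. pval Om T Qs S U (\<lambda>w. - G w) x)"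
    by (rule monetary[OF A_eq U_util]) simp
  show "convex_risk (QT Om T Qs)
             {G\<in>W0 Om T. \<forall>z::real. uval Om T Qs S U (\<lambda>w. - G w) z < \<infinity>}
             (\<lambda>G. pval Om T Qs S U (\<lambda>w. - G w) x)"
    by (rule convex_part[OF A_eq U_util S_meas])
next
  assume h: "(\<forall>t\<in>{0..T}. S t \<in> borel_measurable (OmP Om t)) \<and> NA Om T Qs S
         \<and> uval Om T Qs S U (\<lambda>_. 0) x > -\<infinity>
         \<and> (\<forall>\<delta>>0. uval Om T Qs S U (\<lambda>_. 0) (x - \<delta>) < uval Om T Qs S U (\<lambda>_. 0) x)"
  have "pval Om T Qs S U (\<lambda>_. 0) x = 0" using h by (intro normalized) auto
  then show "pval Om T Qs S U (\<lambda>w. - (\<lambda>_. 0) w) x = 0" by simp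
qed

end
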